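(* Suppose the assumptions on $F$, $\xi$ and $\pi$ below hold, and fix $\varepsilon>0$, $\sigma>0$. Let $a:\mathcal P(\mathcal X)\times\mathcal X\to\mathbb R$ be any one of the following four functions: (1) $a(\mu,x)=\frac{\delta F}{\delta\mu}(\mu,x)+\sigma\log\frac{(K_\varepsilon*\mu)(x)}{\pi(x)}-\sigma\,\mathrm{KL}(K_\varepsilon*\mu\,|\,\pi)$; (2) $a(\mu,x)=\frac{\delta F}{\delta\mu}(\mu,x)+\sigma\log\frac{(K_\varepsilon*\mu)(x)}{(K_\varepsilon*\pi)(x)}-\sigma\,\mathrm{KL}(K_\varepsilon*\mu\,|\,K_\varepsilon*\pi)$; (3) $a(\mu,x)=\frac{\delta F}{\delta\mu}(\mu,x)+\sigma\Big(\log\frac{(K_\varepsilon*\mu)(x)}{\pi(x)}+\int_{\mathcal X}\frac{K_\varepsilon(x-y)}{(K_\varepsilon*\mu)(y)}\mu(dy)-\int_{\mathcal X}\log\frac{(K_\varepsilon*\mu)(z)}{\pi(z)}\mu(dz)-1\Big)$; (4) $a(\mu,x)=\frac{\delta F}{\delta\mu}(\mu,x)+\sigma\Big(K_\varepsilon*\log\frac{K_\varepsilon*\mu}{\pi}\Big)(x)-\sigma\,\mathrm{KL}(K_\varepsilon*\mu\,|\,\pi)$. Then there exist constants $M_a,L_a>0$ (depending on $\varepsilon,\sigma,d,\mathcal X,\xi,\pi,F$) such that $|a(m,x)|\le M_a$ and $|a(m,x)-a(m',y)|\le L_a(|x-y|+\mathcal W_2(m,m'))$ for all $x,y\in\mathcal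 X$ and $m,m'\in\mathcal P_2(\mathcal X)$.
   Context: $\mathcal X\subset\mathbb R^d$ is compact; $\mathcal W_p$ is the $p$-Wasserstein distance. Flat derivative: $F:\mathcal P(\mathcal X)\to\mathbb R$ admits a flat derivative $\frac{\delta F}{\delta\mu}:\mathcal P(\mathcal X)\times\mathcal X\to\mathbb R$ if it is continuous in the measure argument, suitably bounded, and $F(m')-F(m)=\int_0^1\int_{\mathcal X}\frac{\delta F}{\delta\mu}(m+\lambda(m'-m),x)(m'-m)(dx)\,d\lambda$ for all $m,m'$. Assumption on $F$: $F$ is lower semicontinuous w.r.t. weak convergence, bounded below by some $F_{\min}$, admits a flat derivative with $|\frac{\delta F}{\delta\mu}(\mu,x)|\le C_F$ and $|\frac{\delta F}{\delta\mu}(\mu,x)-\frac{\delta F}{\delta\mu}(\nu,y)|\le L_F(\mathcal W_2(\mu,\nu)+|x-y|)$ for all $\mu,\nu,x,y$. Assumption on the kernel: $\xi:\mathbb R^d\to\mathbb R_+$ is a smooth, Lipschitz, radial probability density with full support and finite second moment; $\xi_\varepsilon(z):=C_{\varepsilon,d}^{-1}\varepsilon^{-d}\xi(z/\varepsilon)$ where $C_{\varepsilon,d}=\int_{\mathcal X}\varepsilon^{-d}\xi(x/\varepsilon)dx$; $K_\varepsilon:=\xi_\varepsilon*\xi_\varepsilon$. For a measure $\mu$ on $\mathcal X$, $(K_\varepsilon*\mu)(x)=\int_{\mathcal X}K_\varepsilon(x-y)\mu(dy)$, and for a function $f$ on $\mathcal X$, $(K_\varepsilon*f)(x)=\int_{\mathcal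 X}K_\varepsilon(x-y)f(y)dy$. Assumption on $\pi$: $\pi$ is a probability density on $\mathcal X$ (w.r.t. Lebesgue measure), $\pi=e^{-U}$ with $U:\mathcal X\to\mathbb R$ continuous, and $\pi$ is Lipschitz on $\mathcal X$. For positive densities $p,q$ on $\mathcal X$, $\mathrm{KL}(p\,|\,q)=\int_{\mathcal X}p\log(p/q)\,dx$. *)

theory Defs
  imports "HOL-Analysis.Analysis" "HOL-Probability.Probability"
begin

definition probs :: "'a::euclidean_space set \<Rightarrow> 'a measure set" where
  "probs X = {\<mu>. prob_space \<mu> \<and> sets \<mu> = sets (borel :: 'a measure) \<and> emeasure \<mu> (UNIV - X) = 0}"

definition probs2 :: "'a::euclidean_space set \<Rightarrow> 'a measure set" where
  "probs2 X = {\<mu> \<in> probs X. integrable \<mu> (\<lambda>x. (norm x)^2)}"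

definition couplings :: "'a::euclidean_space measure \<Rightarrow> 'a measure \<Rightarrow> ('a \<times> 'a) measure set" where
  "couplings \<mu> \<nu> = {\<gamma>. prob_space \<gamma> \<and> sets \<gamma> = sets (borel \<Otimes>\<^sub>M borel :: ('a \<times> 'a) measure)
      \<and> distr \<gamma> borel fst = \<mu> \<and> distr \<gamma> borel snd = \<nu>}"

definition W2 :: "'a::euclidean_space measure \<Rightarrow> 'a measure \<Rightarrow> real" where
  "W2 \<mu> \<nu> = sqrt (enn2real (INF \<gamma>\<in>couplings \<mu> \<nu>.
       \<integral>\<^sup>+ p. ennreal ((dist (fst p) (snd p))^2) \<partial>\<gamma>))"

definition weak_conv_meas :: "(nat \<Rightarrow> 'a::euclidean_space measure) \<Rightarrow> 'a measure \<Rightarrow> bool" where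
  "weak_conv_meas \<mu>s \<mu> \<longleftrightarrow> (\<forall>f::'a \<Rightarrow> real. continuous_on UNIV f \<and> bounded (range f) \<longrightarrow>
      (\<lambda>n. \<integral>x. f x \<partial>(\<mu>s n)) \<longlonglongrightarrow> (\<integral>x. f x \<partial>\<mu>))"

text \<open>Convex combination m + l (m' - m) = (1 - l) m + l m'.\<close>
definition mix :: "real \<Rightarrow> 'a::euclidean_space measure \<Rightarrow> 'a measure \<Rightarrow> 'a measure" where
  "mix l m m' = measure_of UNIV (sets (borel :: 'a measure))
      (\<lambda>A. ennreal (1 - l) * emeasure m A + ennreal l * emeasure m' A)"

definition flat_derivative ::
  "'a::euclidean_space set \<Rightarrow> ('a measure \<Rightarrow> real) \<Rightarrow> ('a measure \<Rightarrow> 'a \<Rightarrow> real) \<Rightarrow> bool" where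
  "flat_derivative X F dF \<longleftrightarrow>
     (\<forall>x\<in>X. \<forall>\<mu>s \<mu>. (\<forall>n. \<mu>s n \<in> probs X) \<and> \<mu> \<in> probs X \<and> weak_conv_meas \<mu>s \<mu> \<longrightarrow>
         (\<lambda>n. dF (\<mu>s n) x) \<longlonglongrightarrow> dF \<mu> x) \<and>
     (\<forall>m\<in>probs X. \<forall>m'\<in>probs X.
        F m' - F m = integral {0..1} (\<lambda>l. (\<integral>x. dF (mix l m m') x \<partial>m') - (\<integral>x. dF (mix l m m') x \<partial>m)))"

text \<open>C-infinity smoothness: a family of continuous iterated directional derivatives.\<close>
definition smooth_fun :: "('a::euclidean_space \<Rightarrow> real) \<Rightarrow> bool" where
  "smooth_fun f \<longleftrightarrow> (\<exists>D :: 'a list \<Rightarrow> 'a \<Rightarrow> real. D [] = f \<and> (\<forall>vs. continuous_on UNIV (D vs)) \<and>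
      (\<forall>vs x. (D vs has_derivative (\<lambda>h. D (h # vs) x)) (at x)))"

definition xi_eps :: "('a::euclidean_space \<Rightarrow> real) \<Rightarrow> 'a set \<Rightarrow> real \<Rightarrow> 'a \<Rightarrow> real" where
  "xi_eps \<xi> X \<epsilon> z =
     (let C = (LINT x:X|lborel. \<xi> ((1/\<epsilon>) *\<^sub>R x) / \<epsilon> ^ DIM('a))
      in \<xi> ((1/\<epsilon>) *\<^sub>R z) / (C * \<epsilon> ^ DIM('a)))"

definition K_eps :: "('a::euclidean_space \<Rightarrow> real) \<Rightarrow> 'a set \<Rightarrow> real \<Rightarrow> 'a \<Rightarrow> real" where
  "K_eps \<xi> X \<epsilon> z = (\<integral>w. xi_eps \<xi> X \<epsilon> (z - w) * xi_eps \<xi> X \<epsilon> w \<partial>lborel)"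

definition conv_meas :: "('a::euclidean_space \<Rightarrow> real) \<Rightarrow> 'a set \<Rightarrow> 'a measure \<Rightarrow> 'a \<Rightarrow> real" where
  "conv_meas K X \<mu> x = (LINT y:X|\<mu>. K (x - y))"

definition conv_fun :: "('a::euclidean_space \<Rightarrow> real) \<Rightarrow> 'a set \<Rightarrow> ('a \<Rightarrow> real) \<Rightarrow> 'a \<Rightarrow> real" where
  "conv_fun K X f x = (LINT y:X|lborel. K (x - y) * f y)"

definition KL :: "'a::euclidean_space set \<Rightarrow> ('a \<Rightarrow> real) \<Rightarrow> ('a \<Rightarrow> real) \<Rightarrow> real" where
  "KL X p q = (LINT x:X|lborel. p x * ln (p x / q x))"

definition a1 where
  "a1 X dF \<sigma> K \<pi> \<mu> x = dF \<mu> x + \<sigma> * ln (conv_meas K X \<mu> x / \<pi> x)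
      - \<sigma> * KL X (conv_meas K X \<mu>) \<pi>"

definition a2 where
  "a2 X dF \<sigma> K \<pi> \<mu> x = dF \<mu> x + \<sigma> * ln (conv_meas K X \<mu> x / conv_fun K X \<pi> x)
      - \<sigma> * KL X (conv_meas K X \<mu>) (conv_fun K X \<pi>)"

definition a3 where
  "a3 X dF \<sigma> K \<pi> \<mu> x = dF \<mu> x + \<sigma> * (ln (conv_meas K X \<mu> x / \<pi> x)
      + (LINT y:X|\<mu>. K (x - y) / conv_meas K X \<mu> y)
      - (LINT z:X|\<mu>. ln (conv_meas K X \<mu> z / \<pi> z)) - 1)"

definition a4 where
  "a4 X dF \<sigma> K \<pi> \<mu> x = dF \<mu> x + \<sigma> * conv_fun K X (\<lambda>z. ln (conv_meas K X \<mu> z / \<pi> z)) x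
      - \<sigma> * KL X (conv_meas K X \<mu>) \<pi>"

end

theory Submission
  imports Defs
begin

lemma probsD:
  assumes "\<mu> \<in> probs X"
  shows "prob_space \<mu>" "sets \<mu> = sets borel" "space \<mu> = UNIV" "emeasure \<mu> (UNIV - X) = 0"
  using assms unfolding probs_def by (auto dest: sets_eq_imp_space_eq)

lemma probs_AE:
  assumes "\<mu> \<in> probs X" "closed X"
  shows "AE x in \<mu>. x \<in> X"
proof -
  note d = probsD[OF assms(1)]
  have "UNIV - X \<in> sets \<mu>" using d(2) assms(2) by (simp add: Compl_eq_Diff_UNIV[symmetric] borel_open open_Compl)
  then show ?thesis
    by (intro AE_I[where N="UNIV - X"]) (use d in auto)
qed

lemma couplingD:
  assumes "\<gamma> \<in> couplings \<mu> \<nu>"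
  shows "prob_space \<gamma>" "sets \<gamma> = sets borel" "space \<gamma> = UNIV"
    "fst \<in> \<gamma> \<rightarrow>\<^sub>M borel" "snd \<in> \<gamma> \<rightarrow>\<^sub>M borel"
    "distr \<gamma> borel fst = \<mu>" "distr \<gamma> borel snd = \<nu>"
proof -
  have s: "sets \<gamma> = sets (borel \<Otimes>\<^sub>M borel)" using assms by (simp add: couplings_def)
  then show "sets \<gamma> = sets borel" by (metis borel_prod)
  then show "space \<gamma> = UNIV" by (auto dest: sets_eq_imp_space_eq)
  show "fst \<in> \<gamma> \<rightarrow>\<^sub>M borel" by (simp add: measurable_cong_sets[OF s refl])
  show "snd \<in> \<gamma> \<rightarrow>\<^sub>M borel" by (simp add: measurable_cong_sets[OF s refl])
qed (use assms in \<open>auto simp: couplings_def\<close>)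

lemma coupling_AE:
  assumes "\<gamma> \<in> couplings \<mu> \<nu>" "\<mu> \<in> probs X" "\<nu> \<in> probs X" "closed X"
  shows "AE p in \<gamma>. fst p \<in> X \<and> snd p \<in> X"
proof -
  note c = couplingD[OF assms(1)]
  have X: "UNIV - X \<in> sets borel" using assms(4) by (simp add: Compl_eq_Diff_UNIV[symmetric] borel_open open_Compl)
  have "emeasure \<gamma> (fst -` (UNIV - X)) = emeasure (distr \<gamma> borel fst) (UNIV - X)"
    using emeasure_distr[OF c(4) X] c(3) by simp
  also have "\<dots> = 0" using c(6) probsD(4)[OF assms(2)] by simp
  finally have 1: "emeasure \<gamma> (fst -` (UNIV - X)) = 0" .
  have "emeasure \<gamma> (snd -` (UNIV - X)) = emeasure (distr \<gamma> borel snd) (UNIV - X)"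
    using emeasure_distr[OF c(5) X] c(3) by simp
  also have "\<dots> = 0" using c(7) probsD(4)[OF assms(3)] by simp
  finally have 2: "emeasure \<gamma> (snd -` (UNIV - X)) = 0" .
  have m1: "fst -` (UNIV - X) \<in> sets \<gamma>" using measurable_sets[OF c(4) X] c(3) by simp
  have m2: "snd -` (UNIV - X) \<in> sets \<gamma>" using measurable_sets[OF c(5) X] c(3) by simp
  have "AE p in \<gamma>. fst p \<in> X" by (intro AE_I[OF _ 1 m1]) (use c in auto)
  moreover have "AE p in \<gamma>. snd p \<in> X" by (intro AE_I[OF _ 2 m2]) (use c in auto)
  ultimately show ?thesis by auto
qed

lemma couplings_nonempty:
  assumes "\<mu> \<in> probs X" "\<nu> \<in> probs X"
  shows "\<mu> \<Otimes>\<^sub>M \<nu> \<in> couplings \<mu> \<nu>"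
proof -
  note a = probsD[OF assms(1)] and b = probsD[OF assms(2)]
  interpret A: prob_space \<mu> by (rule a(1))
  interpret B: prob_space \<nu> by (rule b(1))
  interpret P: pair_prob_space \<mu> \<nu> by unfold_locales
  have s: "sets (\<mu> \<Otimes>\<^sub>M \<nu>) = sets (borel \<Otimes>\<^sub>M borel)"
    using a b by (intro sets_pair_measure_cong) auto
  have f: "distr (\<mu> \<Otimes>\<^sub>M \<nu>) borel fst = \<mu>"
  proof (rule measure_eqI)
    fix A assume "A \<in> sets (distr (\<mu> \<Otimes>\<^sub>M \<nu>) borel fst)"
    then have A: "A \<in> sets borel" by simp
    have "emeasure (distr (\<mu> \<Otimes>\<^sub>M \<nu>) borel fst) A = emeasure (\<mu> \<Otimes>\<^sub>M \<nu>) (A \<times> UNIV)"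
      using A a b by (subst emeasure_distr) (auto simp: measurable_cong_sets[OF s refl] space_pair_measure intro!: arg_cong2[where f=emeasure])
    also have "\<dots> = emeasure \<mu> A * emeasure \<nu> UNIV"
      using A a b by (intro B.emeasure_pair_measure_Times) auto
    finally show "emeasure (distr (\<mu> \<Otimes>\<^sub>M \<nu>) borel fst) A = emeasure \<mu> A"
      using B.emeasure_space_1 b by simp
  qed (use a in simp)
  have g: "distr (\<mu> \<Otimes>\<^sub>M \<nu>) borel snd = \<nu>"
  proof (rule measure_eqI)
    fix A assume "A \<in> sets (distr (\<mu> \<Otimes>\<^sub>M \<nu>) borel snd)"
    then have A: "A \<in> sets borel" by simp
    have "emeasure (distr (\<mu> \<Otimes>\<^sub>M \<nu>) borel snd) A = emeasure (\<mu> \<Otimes>\<^sub>M \<nu>) (UNIV \<times> A)"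
      using A a b by (subst emeasure_distr) (auto simp: measurable_cong_sets[OF s refl] space_pair_measure intro!: arg_cong2[where f=emeasure])
    also have "\<dots> = emeasure \<mu> UNIV * emeasure \<nu> A"
      using A a b by (intro B.emeasure_pair_measure_Times) auto
    finally show "emeasure (distr (\<mu> \<Otimes>\<^sub>M \<nu>) borel snd) A = emeasure \<nu> A"
      using A.emeasure_space_1 a by simp
  qed (use b in simp)
  show ?thesis unfolding couplings_def using s f g P.prob_space_axioms by auto
qed


lemma W2_self:
  assumes "\<mu> \<in> probs X"
  shows "W2 \<mu> \<mu> = 0"
proof -
  note a = probsD[OF assms]
  interpret A: prob_space \<mu> by (rule a(1))
  define \<gamma> where "\<gamma> = distr \<mu> (borel \<Otimes>\<^sub>M borel) (\<lambda>x. (x, x))"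
  have m: "(\<lambda>x. (x, x)) \<in> \<mu> \<rightarrow>\<^sub>M (borel \<Otimes>\<^sub>M borel)"
    using a by (simp add: measurable_cong_sets[OF a(2) refl])
  have "\<gamma> \<in> couplings \<mu> \<mu>"
    unfolding couplings_def
  proof (intro CollectI conjI)
    show "prob_space \<gamma>" unfolding \<gamma>_def by (rule A.prob_space_distr[OF m])
    show "sets \<gamma> = sets (borel \<Otimes>\<^sub>M borel)" unfolding \<gamma>_def by simp
    have "distr \<gamma> borel fst = distr \<mu> borel (fst \<circ> (\<lambda>x. (x, x)))"
      unfolding \<gamma>_def by (rule distr_distr[OF _ m]) simp
    also have "\<dots> = \<mu>" using distr_id2[of borel \<mu>] a by (simp add: o_def)
    finally show "distr \<gamma> borel fst = \<mu>" .
    have "distr \<gamma> borel snd = distr \<mu> borel (snd \<circ> (\<lambda>x. (x, x)))"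
      unfolding \<gamma>_def by (rule distr_distr[OF _ m]) simp
    also have "\<dots> = \<mu>" using distr_id2[of borel \<mu>] a by (simp add: o_def)
    finally show "distr \<gamma> borel snd = \<mu>" .
  qed
  moreover have "(\<integral>\<^sup>+ p. ennreal ((dist (fst p) (snd p))^2) \<partial>\<gamma>) = 0"
    unfolding \<gamma>_def by (subst nn_integral_distr[OF m]) auto
  ultimately have "(INF \<gamma>\<in>couplings \<mu> \<mu>. \<integral>\<^sup>+ p. ennreal ((dist (fst p) (snd p))^2) \<partial>\<gamma>) = 0"
    by (metis (no_types, lifting) INF_lower bot.extremum_uniqueI bot_ennreal)
  then show ?thesis unfolding W2_def by simp
qed

lemma W2_nonneg: "W2 \<mu> \<nu> \<ge> 0"
  unfolding W2_def by simp

lemma W2_lip: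
  fixes f :: "'a::euclidean_space \<Rightarrow> real"
  assumes X: "compact X" and mu: "\<mu> \<in> probs X" and nu: "\<nu> \<in> probs X"
    and fm: "f \<in> borel_measurable borel" and L: "0 \<le> L"
    and lip: "\<And>x y. x \<in> X \<Longrightarrow> y \<in> X \<Longrightarrow> \<bar>f x - f y\<bar> \<le> L * dist x y"
    and bd: "\<And>x. x \<in> X \<Longrightarrow> \<bar>f x\<bar> \<le> B"
  shows "\<bar>(\<integral>x. f x \<partial>\<mu>) - (\<integral>x. f x \<partial>\<nu>)\<bar> \<le> L * W2 \<mu> \<nu>"
proof -
  obtain D where D: "\<And>x. x \<in> X \<Longrightarrow> norm x \<le> D" using compact_imp_bounded[OF X] unfolding bounded_iff by blast
  define cost :: "('a \<times> 'a) measure \<Rightarrow> ennreal" where "cost \<gamma> = (\<integral>\<^sup>+ p. ennreal ((dist (fst p) (snd p))^2) \<partial>\<gamma>)" for \<gamma>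
  define \<Delta> where "\<Delta> = (\<integral>x. f x \<partial>\<mu>) - (\<integral>x. f x \<partial>\<nu>)"
  have key: "\<Delta>^2 \<le> L^2 * enn2real (cost \<gamma>) \<and> cost \<gamma> < \<infinity>" if g: "\<gamma> \<in> couplings \<mu> \<nu>" for \<gamma>
  proof -
    note c = couplingD[OF g]
    interpret G: prob_space \<gamma> by (rule c(1))
    have AE: "AE p in \<gamma>. fst p \<in> X \<and> snd p \<in> X" by (rule coupling_AE[OF g mu nu compact_imp_closed[OF X]])
    define Z where "Z p = dist (fst p) (snd p)" for p :: "'a \<times> 'a"
    have Zm: "Z \<in> borel_measurable \<gamma>" unfolding Z_def using c(4,5) by (intro borel_measurable_dist)
    have Z2m: "(\<lambda>p. Z p ^ 2) \<in> borel_measurable \<gamma>" using Zm by measurable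
    have f1m: "(\<lambda>p. f (fst p)) \<in> borel_measurable \<gamma>" using measurable_compose[OF c(4) fm] by (simp add: o_def)
    have f2m: "(\<lambda>p. f (snd p)) \<in> borel_measurable \<gamma>" using measurable_compose[OF c(5) fm] by (simp add: o_def)
    have Zb: "AE p in \<gamma>. norm (Z p) \<le> 2 * D"
      using AE
    proof eventually_elim
      case (elim p)
      then have "dist (fst p) (snd p) \<le> norm (fst p) + norm (snd p)" by (simp add: dist_norm norm_triangle_ineq4)
      moreover have "norm (fst p) \<le> D" "norm (snd p) \<le> D" using elim D by auto
      ultimately show ?case unfolding Z_def by simp
    qed
    have Zi: "integrable \<gamma> Z" by (rule G.integrable_const_bound[OF Zb Zm])
    have Z2b: "AE p in \<gamma>. norm (Z p ^ 2) \<le> (2 * D)^2"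
      using Zb
    proof eventually_elim
      case (elim p)
      have "Z p ^ 2 \<le> (2 * D)^2" using elim by (intro power_mono) (auto simp: Z_def)
      then show ?case by (simp add: Z_def)
    qed
    have Z2i: "integrable \<gamma> (\<lambda>p. Z p ^ 2)" by (rule G.integrable_const_bound[OF Z2b Z2m])
    have f1i: "integrable \<gamma> (\<lambda>p. f (fst p))"
      by (rule G.integrable_const_bound[OF _ f1m, where B=B]) (use AE bd in auto)
    have f2i: "integrable \<gamma> (\<lambda>p. f (snd p))"
      by (rule G.integrable_const_bound[OF _ f2m, where B=B]) (use AE bd in auto)
    have e1: "(\<integral>x. f x \<partial>\<mu>) = (\<integral>p. f (fst p) \<partial>\<gamma>)" using integral_distr[OF c(4) fm] c(6) by simp
    have e2: "(\<integral>x. f x \<partial>\<nu>) = (\<integral>p. f (snd p) \<partial>\<gamma>)" using integral_distr[OF c(5) fm] c(7) by simp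
    have "\<Delta> = (\<integral>p. f (fst p) - f (snd p) \<partial>\<gamma>)"
      unfolding \<Delta>_def e1 e2 using f1i f2i by simp
    then have "\<bar>\<Delta>\<bar> \<le> (\<integral>p. \<bar>f (fst p) - f (snd p)\<bar> \<partial>\<gamma>)" by (simp add: integral_abs_bound)
    also have "\<dots> \<le> (\<integral>p. L * Z p \<partial>\<gamma>)"
    proof (rule integral_mono_AE)
      show "integrable \<gamma> (\<lambda>p. \<bar>f (fst p) - f (snd p)\<bar>)" using f1i f2i by auto
      show "integrable \<gamma> (\<lambda>p. L * Z p)" using Zi by auto
      show "AE p in \<gamma>. \<bar>f (fst p) - f (snd p)\<bar> \<le> L * Z p"
        using AE by eventually_elim (auto simp: Z_def lip)
    qed
    also have "\<dots> = L * (\<integral>p. Z p \<partial>\<gamma>)" by simp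
    finally have d1: "\<bar>\<Delta>\<bar> \<le> L * (\<integral>p. Z p \<partial>\<gamma>)" .
    have EZ0: "0 \<le> (\<integral>p. Z p \<partial>\<gamma>)" by (simp add: Z_def)
    have "0 \<le> G.variance Z" by simp
    then have v: "(\<integral>p. Z p \<partial>\<gamma>)^2 \<le> (\<integral>p. Z p ^ 2 \<partial>\<gamma>)" using G.variance_eq[OF Zi Z2i] by simp
    have "\<Delta>^2 = \<bar>\<Delta>\<bar>^2" by simp
    also have "\<dots> \<le> (L * (\<integral>p. Z p \<partial>\<gamma>))^2" by (rule power_mono[OF d1]) simp
    also have "\<dots> = L^2 * (\<integral>p. Z p \<partial>\<gamma>)^2" by (simp add: power_mult_distrib)
    also have "\<dots> \<le> L^2 * (\<integral>p. Z p ^ 2 \<partial>\<gamma>)" by (rule mult_left_mono[OF v]) simp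
    finally have d2: "\<Delta>^2 \<le> L^2 * (\<integral>p. Z p ^ 2 \<partial>\<gamma>)" .
    have ce: "cost \<gamma> = ennreal (\<integral>p. Z p ^ 2 \<partial>\<gamma>)"
      unfolding cost_def Z_def[symmetric] by (rule nn_integral_eq_integral[OF Z2i]) simp
    show ?thesis using d2 ce by simp
  qed
  define I where "I = (INF \<gamma>\<in>couplings \<mu> \<nu>. cost \<gamma>)"
  have W: "W2 \<mu> \<nu> = sqrt (enn2real I)" unfolding W2_def I_def cost_def by simp
  have g0: "\<mu> \<Otimes>\<^sub>M \<nu> \<in> couplings \<mu> \<nu>" by (rule couplings_nonempty[OF mu nu])
  have If: "I < \<infinity>" using key[OF g0] INF_lower[OF g0, of cost] unfolding I_def by (meson order.strict_trans1)
  have "\<Delta>^2 \<le> L^2 * enn2real I"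
  proof (cases "L = 0")
    case True
    then show ?thesis using key[OF g0] by simp
  next
    case False
    then have Lp: "L^2 > 0" using L by simp
    have "ennreal (\<Delta>^2 / L^2) \<le> cost \<gamma>" if g: "\<gamma> \<in> couplings \<mu> \<nu>" for \<gamma>
    proof -
      have "\<Delta>^2 / L^2 \<le> enn2real (cost \<gamma>)" using key[OF g] Lp by (simp add: divide_le_eq mult.commute)
      then have "ennreal (\<Delta>^2 / L^2) \<le> ennreal (enn2real (cost \<gamma>))" by (simp add: ennreal_leI)
      also have "\<dots> = cost \<gamma>" using key[OF g] by (simp add: less_top)
      finally show ?thesis .
    qed
    then have "ennreal (\<Delta>^2 / L^2) \<le> I" unfolding I_def by (rule INF_greatest)
    then have "ennreal (\<Delta>^2 / L^2) \<le> ennreal (enn2real I)" using If by (simp add: less_top)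
    then have "\<Delta>^2 / L^2 \<le> enn2real I" by (subst (asm) ennreal_le_iff) auto
    then show ?thesis using Lp by (simp add: divide_le_eq mult.commute)
  qed
  then have "sqrt (\<Delta>^2) \<le> sqrt (L^2 * enn2real I)" by (rule real_sqrt_le_mono)
  then have "\<bar>\<Delta>\<bar> \<le> L * sqrt (enn2real I)" using L by (simp add: real_sqrt_mult)
  then show ?thesis unfolding \<Delta>_def W by simp
qed

definition goodf :: "'a::euclidean_space set \<Rightarrow> 'b::metric_space set \<Rightarrow> ('a measure \<Rightarrow> 'b \<Rightarrow> real) \<Rightarrow> bool" where
 "goodf X S \<Phi> \<longleftrightarrow> (\<exists>B L. 0 \<le> B \<and> 0 \<le> L \<and> (\<forall>\<mu>\<in>probs X. \<forall>s\<in>S. \<bar>\<Phi> \<mu> s\<bar> \<le> B) \<and>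
    (\<forall>\<mu>\<in>probs X. \<forall>s\<in>S. \<forall>t\<in>S. \<bar>\<Phi> \<mu> s - \<Phi> \<mu> t\<bar> \<le> L * dist s t) \<and>
    (\<forall>\<mu>\<in>probs X. \<forall>\<mu>'\<in>probs X. \<forall>s\<in>S. \<bar>\<Phi> \<mu> s - \<Phi> \<mu>' s\<bar> \<le> L * W2 \<mu> \<mu>'))"

lemma goodfI:
  assumes "\<And>\<mu> s. \<mu> \<in> probs X \<Longrightarrow> s \<in> S \<Longrightarrow> \<bar>\<Phi> \<mu> s\<bar> \<le> B"
    "\<And>\<mu> s t. \<mu> \<in> probs X \<Longrightarrow> s \<in> S \<Longrightarrow> t \<in> S \<Longrightarrow> \<bar>\<Phi> \<mu> s - \<Phi> \<mu> t\<bar> \<le> L * dist s t"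
    "\<And>\<mu> \<mu>' s. \<mu> \<in> probs X \<Longrightarrow> \<mu>' \<in> probs X \<Longrightarrow> s \<in> S \<Longrightarrow> \<bar>\<Phi> \<mu> s - \<Phi> \<mu>' s\<bar> \<le> L * W2 \<mu> \<mu>'"
  shows "goodf X S \<Phi>"
proof -
  have 1: "\<forall>\<mu>\<in>probs X. \<forall>s\<in>S. \<forall>t\<in>S. \<bar>\<Phi> \<mu> s - \<Phi> \<mu> t\<bar> \<le> max L 0 * dist s t"
  proof (intro ballI)
    fix \<mu> s t assume "\<mu> \<in> probs X" "s \<in> S" "t \<in> S"
    then have "\<bar>\<Phi> \<mu> s - \<Phi> \<mu> t\<bar> \<le> L * dist s t" by (rule assms(2))
    also have "\<dots> \<le> max L 0 * dist s t" by (intro mult_right_mono) auto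
    finally show "\<bar>\<Phi> \<mu> s - \<Phi> \<mu> t\<bar> \<le> max L 0 * dist s t" .
  qed
  have 2: "\<forall>\<mu>\<in>probs X. \<forall>\<mu>'\<in>probs X. \<forall>s\<in>S. \<bar>\<Phi> \<mu> s - \<Phi> \<mu>' s\<bar> \<le> max L 0 * W2 \<mu> \<mu>'"
  proof (intro ballI)
    fix \<mu> \<mu>' s assume "\<mu> \<in> probs X" "\<mu>' \<in> probs X" "s \<in> S"
    then have "\<bar>\<Phi> \<mu> s - \<Phi> \<mu>' s\<bar> \<le> L * W2 \<mu> \<mu>'" by (rule assms(3))
    also have "\<dots> \<le> max L 0 * W2 \<mu> \<mu>'" by (intro mult_right_mono W2_nonneg) auto
    finally show "\<bar>\<Phi> \<mu> s - \<Phi> \<mu>' s\<bar> \<le> max L 0 * W2 \<mu> \<mu>'" .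
  qed
  have 3: "\<forall>\<mu>\<in>probs X. \<forall>s\<in>S. \<bar>\<Phi> \<mu> s\<bar> \<le> max B 0"
    using assms(1) by (auto intro: le_max_iff_disj[THEN iffD2])
  show ?thesis unfolding goodf_def
    by (rule exI[of _ "max B 0"], rule exI[of _ "max L 0"]) (use 1 2 3 in auto)
qed

lemma goodfE:
  assumes "goodf X S \<Phi>"
  obtains B L where "0 \<le> B" "0 \<le> L"
    "\<And>\<mu> s. \<mu> \<in> probs X \<Longrightarrow> s \<in> S \<Longrightarrow> \<bar>\<Phi> \<mu> s\<bar> \<le> B"
    "\<And>\<mu> s t. \<mu> \<in> probs X \<Longrightarrow> s \<in> S \<Longrightarrow> t \<in> S \<Longrightarrow> \<bar>\<Phi> \<mu> s - \<Phi> \<mu> t\<bar> \<le> L * dist s t"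
    "\<And>\<mu> \<mu>' s. \<mu> \<in> probs X \<Longrightarrow> \<mu>' \<in> probs X \<Longrightarrow> s \<in> S \<Longrightarrow> \<bar>\<Phi> \<mu> s - \<Phi> \<mu>' s\<bar> \<le> L * W2 \<mu> \<mu>'"
proof -
  obtain B L where b: "0 \<le> B \<and> 0 \<le> L \<and> (\<forall>\<mu>\<in>probs X. \<forall>s\<in>S. \<bar>\<Phi> \<mu> s\<bar> \<le> B) \<and>
    (\<forall>\<mu>\<in>probs X. \<forall>s\<in>S. \<forall>t\<in>S. \<bar>\<Phi> \<mu> s - \<Phi> \<mu> t\<bar> \<le> L * dist s t) \<and>
    (\<forall>\<mu>\<in>probs X. \<forall>\<mu>'\<in>probs X. \<forall>s\<in>S. \<bar>\<Phi> \<mu> s - \<Phi> \<mu>' s\<bar> \<le> L * W2 \<mu> \<mu>')"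
    using assms unfolding goodf_def by (elim exE) (rule that)
  show thesis
  proof (rule that)
    show "0 \<le> B" "0 \<le> L" using b by auto
    show "\<And>\<mu> s. \<mu> \<in> probs X \<Longrightarrow> s \<in> S \<Longrightarrow> \<bar>\<Phi> \<mu> s\<bar> \<le> B" using b by blast
    show "\<And>\<mu> s t. \<mu> \<in> probs X \<Longrightarrow> s \<in> S \<Longrightarrow> t \<in> S \<Longrightarrow> \<bar>\<Phi> \<mu> s - \<Phi> \<mu> t\<bar> \<le> L * dist s t"
      using b by blast
    show "\<And>\<mu> \<mu>' s. \<mu> \<in> probs X \<Longrightarrow> \<mu>' \<in> probs X \<Longrightarrow> s \<in> S \<Longrightarrow> \<bar>\<Phi> \<mu> s - \<Phi> \<mu>' s\<bar> \<le> L * W2 \<mu> \<mu>'"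
      using b by blast
  qed
qed

lemma goodf_cong:
  assumes "goodf X S \<Phi>" "\<And>\<mu> s. \<mu> \<in> probs X \<Longrightarrow> s \<in> S \<Longrightarrow> \<Psi> \<mu> s = \<Phi> \<mu> s"
  shows "goodf X S \<Psi>"
proof -
  obtain B L where b: "0 \<le> B" "0 \<le> L"
    "\<And>\<mu> s. \<mu> \<in> probs X \<Longrightarrow> s \<in> S \<Longrightarrow> \<bar>\<Phi> \<mu> s\<bar> \<le> B"
    "\<And>\<mu> s t. \<mu> \<in> probs X \<Longrightarrow> s \<in> S \<Longrightarrow> t \<in> S \<Longrightarrow> \<bar>\<Phi> \<mu> s - \<Phi> \<mu> t\<bar> \<le> L * dist s t"
    "\<And>\<mu> \<mu>' s. \<mu> \<in> probs X \<Longrightarrow> \<mu>' \<in> probs X \<Longrightarrow> s \<in> S \<Longrightarrow> \<bar>\<Phi> \<mu> s - \<Phi> \<mu>' s\<bar> \<le> L * W2 \<mu> \<mu>'"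
    using goodfE[OF assms(1)] by metis
  show ?thesis by (rule goodfI[where B=B and L=L]) (simp_all add: assms(2) b)
qed

lemma goodf_const: "goodf X S (\<lambda>\<mu> s. c)"
  by (rule goodfI[where B="\<bar>c\<bar>" and L=0]) auto

lemma goodf_fun:
  assumes "\<And>s. s \<in> S \<Longrightarrow> \<bar>f s\<bar> \<le> B" "\<And>s t. s \<in> S \<Longrightarrow> t \<in> S \<Longrightarrow> \<bar>f s - f t\<bar> \<le> L * dist s t" "0 \<le> L"
  shows "goodf X S (\<lambda>\<mu> s. f s)"
  by (rule goodfI[where B=B and L=L]) (use assms in \<open>auto intro: mult_nonneg_nonneg W2_nonneg\<close>)

lemma goodf_add:
  assumes f: "goodf X S \<Phi>" and g: "goodf X S \<Psi>"
  shows "goodf X S (\<lambda>\<mu> s. \<Phi> \<mu> s + \<Psi> \<mu> s)"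
proof -
  obtain B L where b: "0 \<le> B" "0 \<le> L"
    "\<And>\<mu> s. \<mu> \<in> probs X \<Longrightarrow> s \<in> S \<Longrightarrow> \<bar>\<Phi> \<mu> s\<bar> \<le> B"
    "\<And>\<mu> s t. \<mu> \<in> probs X \<Longrightarrow> s \<in> S \<Longrightarrow> t \<in> S \<Longrightarrow> \<bar>\<Phi> \<mu> s - \<Phi> \<mu> t\<bar> \<le> L * dist s t"
    "\<And>\<mu> \<mu>' s. \<mu> \<in> probs X \<Longrightarrow> \<mu>' \<in> probs X \<Longrightarrow> s \<in> S \<Longrightarrow> \<bar>\<Phi> \<mu> s - \<Phi> \<mu>' s\<bar> \<le> L * W2 \<mu> \<mu>'"
    using goodfE[OF f] by metis
  obtain B' L' where b': "0 \<le> B'" "0 \<le> L'"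
    "\<And>\<mu> s. \<mu> \<in> probs X \<Longrightarrow> s \<in> S \<Longrightarrow> \<bar>\<Psi> \<mu> s\<bar> \<le> B'"
    "\<And>\<mu> s t. \<mu> \<in> probs X \<Longrightarrow> s \<in> S \<Longrightarrow> t \<in> S \<Longrightarrow> \<bar>\<Psi> \<mu> s - \<Psi> \<mu> t\<bar> \<le> L' * dist s t"
    "\<And>\<mu> \<mu>' s. \<mu> \<in> probs X \<Longrightarrow> \<mu>' \<in> probs X \<Longrightarrow> s \<in> S \<Longrightarrow> \<bar>\<Psi> \<mu> s - \<Psi> \<mu>' s\<bar> \<le> L' * W2 \<mu> \<mu>'"
    using goodfE[OF g] by metis
  show ?thesis
  proof (rule goodfI[where B="B + B'" and L="L + L'"])
    fix \<mu> s assume "\<mu> \<in> probs X" "s \<in> S"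
    then show "\<bar>\<Phi> \<mu> s + \<Psi> \<mu> s\<bar> \<le> B + B'" using b(3) b'(3) by (smt (verit))
  next
    fix \<mu> s t assume a: "\<mu> \<in> probs X" "s \<in> S" "t \<in> S"
    show "\<bar>\<Phi> \<mu> s + \<Psi> \<mu> s - (\<Phi> \<mu> t + \<Psi> \<mu> t)\<bar> \<le> (L + L') * dist s t"
      using b(4)[OF a] b'(4)[OF a] unfolding distrib_right by (smt (verit))
  next
    fix \<mu> \<mu>' s assume a: "\<mu> \<in> probs X" "\<mu>' \<in> probs X" "s \<in> S"
    show "\<bar>\<Phi> \<mu> s + \<Psi> \<mu> s - (\<Phi> \<mu>' s + \<Psi> \<mu>' s)\<bar> \<le> (L + L') * W2 \<mu> \<mu>'"
      using b(5)[OF a] b'(5)[OF a] unfolding distrib_right by (smt (verit))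
  qed
qed

lemma goodf_cmult:
  assumes f: "goodf X S \<Phi>"
  shows "goodf X S (\<lambda>\<mu> s. c * \<Phi> \<mu> s)"
proof -
  obtain B L where b: "0 \<le> B" "0 \<le> L"
    "\<And>\<mu> s. \<mu> \<in> probs X \<Longrightarrow> s \<in> S \<Longrightarrow> \<bar>\<Phi> \<mu> s\<bar> \<le> B"
    "\<And>\<mu> s t. \<mu> \<in> probs X \<Longrightarrow> s \<in> S \<Longrightarrow> t \<in> S \<Longrightarrow> \<bar>\<Phi> \<mu> s - \<Phi> \<mu> t\<bar> \<le> L * dist s t"
    "\<And>\<mu> \<mu>' s. \<mu> \<in> probs X \<Longrightarrow> \<mu>' \<in> probs X \<Longrightarrow> s \<in> S \<Longrightarrow> \<bar>\<Phi> \<mu> s - \<Phi> \<mu>' s\<bar> \<le> L * W2 \<mu> \<mu>'"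
    using goodfE[OF f] by metis
  show ?thesis
  proof (rule goodfI[where B="\<bar>c\<bar> * B" and L="\<bar>c\<bar> * L"])
    fix \<mu> s assume "\<mu> \<in> probs X" "s \<in> S"
    then show "\<bar>c * \<Phi> \<mu> s\<bar> \<le> \<bar>c\<bar> * B" using b(3) by (simp add: abs_mult mult_left_mono)
  next
    fix \<mu> s t assume a: "\<mu> \<in> probs X" "s \<in> S" "t \<in> S"
    have "\<bar>c * \<Phi> \<mu> s - c * \<Phi> \<mu> t\<bar> = \<bar>c\<bar> * \<bar>\<Phi> \<mu> s - \<Phi> \<mu> t\<bar>" by (simp add: abs_mult[symmetric] right_diff_distrib)
    also have "\<dots> \<le> \<bar>c\<bar> * (L * dist s t)" using b(4)[OF a] by (simp add: mult_left_mono)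
    finally show "\<bar>c * \<Phi> \<mu> s - c * \<Phi> \<mu> t\<bar> \<le> \<bar>c\<bar> * L * dist s t" by simp
  next
    fix \<mu> \<mu>' s assume a: "\<mu> \<in> probs X" "\<mu>' \<in> probs X" "s \<in> S"
    have "\<bar>c * \<Phi> \<mu> s - c * \<Phi> \<mu>' s\<bar> = \<bar>c\<bar> * \<bar>\<Phi> \<mu> s - \<Phi> \<mu>' s\<bar>" by (simp add: abs_mult[symmetric] right_diff_distrib)
    also have "\<dots> \<le> \<bar>c\<bar> * (L * W2 \<mu> \<mu>')" using b(5)[OF a] by (simp add: mult_left_mono)
    finally show "\<bar>c * \<Phi> \<mu> s - c * \<Phi> \<mu>' s\<bar> \<le> \<bar>c\<bar> * L * W2 \<mu> \<mu>'" by simp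
  qed
qed

lemma goodf_diff:
  assumes f: "goodf X S \<Phi>" and g: "goodf X S \<Psi>"
  shows "goodf X S (\<lambda>\<mu> s. \<Phi> \<mu> s - \<Psi> \<mu> s)"
  using goodf_add[OF f goodf_cmult[OF g, of "-1"]] by simp

lemma prod_diff_bound:
  fixes a b a' b' :: real
  assumes "\<bar>a\<bar> \<le> A" "\<bar>b'\<bar> \<le> B"
  shows "\<bar>a * b - a' * b'\<bar> \<le> A * \<bar>b - b'\<bar> + B * \<bar>a - a'\<bar>"
proof -
  have "a * b - a' * b' = a * (b - b') + b' * (a - a')" by (simp add: algebra_simps)
  then have "\<bar>a * b - a' * b'\<bar> \<le> \<bar>a\<bar> * \<bar>b - b'\<bar> + \<bar>b'\<bar> * \<bar>a - a'\<bar>"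
    by (metis abs_mult abs_triangle_ineq)
  also have "\<dots> \<le> A * \<bar>b - b'\<bar> + B * \<bar>a - a'\<bar>"
    using assms by (intro add_mono mult_right_mono) auto
  finally show ?thesis .
qed

lemma goodf_mult:
  assumes f: "goodf X S \<Phi>" and g: "goodf X S \<Psi>"
  shows "goodf X S (\<lambda>\<mu> s. \<Phi> \<mu> s * \<Psi> \<mu> s)"
proof -
  obtain B L where b: "0 \<le> B" "0 \<le> L"
    "\<And>\<mu> s. \<mu> \<in> probs X \<Longrightarrow> s \<in> S \<Longrightarrow> \<bar>\<Phi> \<mu> s\<bar> \<le> B"
    "\<And>\<mu> s t. \<mu> \<in> probs X \<Longrightarrow> s \<in> S \<Longrightarrow> t \<in> S \<Longrightarrow> \<bar>\<Phi> \<mu> s - \<Phi> \<mu> t\<bar> \<le> L * dist s t"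
    "\<And>\<mu> \<mu>' s. \<mu> \<in> probs X \<Longrightarrow> \<mu>' \<in> probs X \<Longrightarrow> s \<in> S \<Longrightarrow> \<bar>\<Phi> \<mu> s - \<Phi> \<mu>' s\<bar> \<le> L * W2 \<mu> \<mu>'"
    using goodfE[OF f] by metis
  obtain B' L' where b': "0 \<le> B'" "0 \<le> L'"
    "\<And>\<mu> s. \<mu> \<in> probs X \<Longrightarrow> s \<in> S \<Longrightarrow> \<bar>\<Psi> \<mu> s\<bar> \<le> B'"
    "\<And>\<mu> s t. \<mu> \<in> probs X \<Longrightarrow> s \<in> S \<Longrightarrow> t \<in> S \<Longrightarrow> \<bar>\<Psi> \<mu> s - \<Psi> \<mu> t\<bar> \<le> L' * dist s t"
    "\<And>\<mu> \<mu>' s. \<mu> \<in> probs X \<Longrightarrow> \<mu>' \<in> probs X \<Longrightarrow> s \<in> S \<Longrightarrow> \<bar>\<Psi> \<mu> s - \<Psi> \<mu>' s\<bar> \<le> L' * W2 \<mu> \<mu>'"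
    using goodfE[OF g] by metis
  show ?thesis
  proof (rule goodfI[where B="B * B'" and L="B * L' + B' * L"])
    fix \<mu> s assume a: "\<mu> \<in> probs X" "s \<in> S"
    show "\<bar>\<Phi> \<mu> s * \<Psi> \<mu> s\<bar> \<le> B * B'" unfolding abs_mult
      using b(3)[OF a] b'(3)[OF a] by (intro mult_mono) auto
  next
    fix \<mu> s t assume a: "\<mu> \<in> probs X" "s \<in> S" "t \<in> S"
    have "\<bar>\<Phi> \<mu> s * \<Psi> \<mu> s - \<Phi> \<mu> t * \<Psi> \<mu> t\<bar> \<le> B * \<bar>\<Psi> \<mu> s - \<Psi> \<mu> t\<bar> + B' * \<bar>\<Phi> \<mu> s - \<Phi> \<mu> t\<bar>"
      using a by (intro prod_diff_bound b(3) b'(3))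
    also have "\<dots> \<le> B * (L' * dist s t) + B' * (L * dist s t)"
      using b(4)[OF a] b'(4)[OF a] b b' by (intro add_mono mult_left_mono) auto
    finally show "\<bar>\<Phi> \<mu> s * \<Psi> \<mu> s - \<Phi> \<mu> t * \<Psi> \<mu> t\<bar> \<le> (B * L' + B' * L) * dist s t"
      by (simp add: algebra_simps)
  next
    fix \<mu> \<mu>' s assume a: "\<mu> \<in> probs X" "\<mu>' \<in> probs X" "s \<in> S"
    have "\<bar>\<Phi> \<mu> s * \<Psi> \<mu> s - \<Phi> \<mu>' s * \<Psi> \<mu>' s\<bar> \<le> B * \<bar>\<Psi> \<mu> s - \<Psi> \<mu>' s\<bar> + B' * \<bar>\<Phi> \<mu> s - \<Phi> \<mu>' s\<bar>"
      using a by (intro prod_diff_bound b(3) b'(3))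
    also have "\<dots> \<le> B * (L' * W2 \<mu> \<mu>') + B' * (L * W2 \<mu> \<mu>')"
      using b(5)[OF a] b'(5)[OF a] b b' by (intro add_mono mult_left_mono) auto
    finally show "\<bar>\<Phi> \<mu> s * \<Psi> \<mu> s - \<Phi> \<mu>' s * \<Psi> \<mu>' s\<bar> \<le> (B * L' + B' * L) * W2 \<mu> \<mu>'"
      by (simp add: algebra_simps)
  qed
qed

lemma ln_lip:
  fixes a b k :: real
  assumes "0 < k" "k \<le> a" "k \<le> b"
  shows "\<bar>ln a - ln b\<bar> \<le> \<bar>a - b\<bar> / k"
proof -
  have "ln a - ln b \<le> \<bar>a - b\<bar> / k" if "k \<le> a" "k \<le> b" for a b
  proof -
    have "ln a - ln b = ln (a / b)" using that assms by (simp add: ln_div)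
    also have "\<dots> \<le> a / b - 1" using that assms by (intro ln_le_minus_one) simp
    also have "\<dots> = (a - b) / b" using that assms by (simp add: field_simps)
    also have "\<dots> \<le> \<bar>a - b\<bar> / b" using that assms by (intro divide_right_mono) auto
    also have "\<dots> \<le> \<bar>a - b\<bar> / k" using that assms by (intro divide_left_mono) auto
    finally show ?thesis .
  qed
  from this[of a b] this[of b a] assms show ?thesis by (simp add: abs_le_iff abs_minus_commute)
qed

lemma goodf_ln:
  assumes f: "goodf X S \<Phi>" and k: "0 < k" and lb: "\<And>\<mu> s. \<mu> \<in> probs X \<Longrightarrow> s \<in> S \<Longrightarrow> k \<le> \<Phi> \<mu> s"
  shows "goodf X S (\<lambda>\<mu> s. ln (\<Phi> \<mu> s))"
proof -
  obtain B L where b: "0 \<le> B" "0 \<le> L"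
    "\<And>\<mu> s. \<mu> \<in> probs X \<Longrightarrow> s \<in> S \<Longrightarrow> \<bar>\<Phi> \<mu> s\<bar> \<le> B"
    "\<And>\<mu> s t. \<mu> \<in> probs X \<Longrightarrow> s \<in> S \<Longrightarrow> t \<in> S \<Longrightarrow> \<bar>\<Phi> \<mu> s - \<Phi> \<mu> t\<bar> \<le> L * dist s t"
    "\<And>\<mu> \<mu>' s. \<mu> \<in> probs X \<Longrightarrow> \<mu>' \<in> probs X \<Longrightarrow> s \<in> S \<Longrightarrow> \<bar>\<Phi> \<mu> s - \<Phi> \<mu>' s\<bar> \<le> L * W2 \<mu> \<mu>'"
    using goodfE[OF f] by metis
  show ?thesis
  proof (rule goodfI[where B="\<bar>ln k\<bar> + \<bar>ln (max B k)\<bar>" and L="L / k"])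
    fix \<mu> s assume a: "\<mu> \<in> probs X" "s \<in> S"
    have "ln k \<le> ln (\<Phi> \<mu> s)" using lb[OF a] k by simp
    moreover have "ln (\<Phi> \<mu> s) \<le> ln (max B k)" using lb[OF a] k b(3)[OF a] by (subst ln_le_cancel_iff) auto
    ultimately show "\<bar>ln (\<Phi> \<mu> s)\<bar> \<le> \<bar>ln k\<bar> + \<bar>ln (max B k)\<bar>" by linarith
  next
    fix \<mu> s t assume a: "\<mu> \<in> probs X" "s \<in> S" "t \<in> S"
    have "\<bar>ln (\<Phi> \<mu> s) - ln (\<Phi> \<mu> t)\<bar> \<le> \<bar>\<Phi> \<mu> s - \<Phi> \<mu> t\<bar> / k" using a by (intro ln_lip k lb)
    also have "\<dots> \<le> L * dist s t / k" using b(4)[OF a] k by (intro divide_right_mono) auto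
    finally show "\<bar>ln (\<Phi> \<mu> s) - ln (\<Phi> \<mu> t)\<bar> \<le> L / k * dist s t" by simp
  next
    fix \<mu> \<mu>' s assume a: "\<mu> \<in> probs X" "\<mu>' \<in> probs X" "s \<in> S"
    have "\<bar>ln (\<Phi> \<mu> s) - ln (\<Phi> \<mu>' s)\<bar> \<le> \<bar>\<Phi> \<mu> s - \<Phi> \<mu>' s\<bar> / k" using a by (intro ln_lip k lb)
    also have "\<dots> \<le> L * W2 \<mu> \<mu>' / k" using b(5)[OF a] k by (intro divide_right_mono) auto
    finally show "\<bar>ln (\<Phi> \<mu> s) - ln (\<Phi> \<mu>' s)\<bar> \<le> L / k * W2 \<mu> \<mu>'" by simp
  qed
qed

lemma inv_lip:
  fixes a b k :: real
  assumes "0 < k" "k \<le> a" "k \<le> b"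
  shows "\<bar>1 / a - 1 / b\<bar> \<le> \<bar>a - b\<bar> / k^2"
proof -
  have "1 / a - 1 / b = (b - a) / (a * b)" using assms by (simp add: field_simps)
  then have "\<bar>1 / a - 1 / b\<bar> = \<bar>a - b\<bar> / (a * b)" using assms by (simp add: abs_minus_commute abs_mult)
  also have "\<dots> \<le> \<bar>a - b\<bar> / k^2" using assms
    by (intro divide_left_mono) (auto simp: power2_eq_square intro!: mult_mono)
  finally show ?thesis .
qed

lemma goodf_inv:
  assumes f: "goodf X S \<Phi>" and k: "0 < k" and lb: "\<And>\<mu> s. \<mu> \<in> probs X \<Longrightarrow> s \<in> S \<Longrightarrow> k \<le> \<Phi> \<mu> s"
  shows "goodf X S (\<lambda>\<mu> s. 1 / \<Phi> \<mu> s)"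
proof -
  obtain B L where b: "0 \<le> B" "0 \<le> L"
    "\<And>\<mu> s. \<mu> \<in> probs X \<Longrightarrow> s \<in> S \<Longrightarrow> \<bar>\<Phi> \<mu> s\<bar> \<le> B"
    "\<And>\<mu> s t. \<mu> \<in> probs X \<Longrightarrow> s \<in> S \<Longrightarrow> t \<in> S \<Longrightarrow> \<bar>\<Phi> \<mu> s - \<Phi> \<mu> t\<bar> \<le> L * dist s t"
    "\<And>\<mu> \<mu>' s. \<mu> \<in> probs X \<Longrightarrow> \<mu>' \<in> probs X \<Longrightarrow> s \<in> S \<Longrightarrow> \<bar>\<Phi> \<mu> s - \<Phi> \<mu>' s\<bar> \<le> L * W2 \<mu> \<mu>'"
    using goodfE[OF f] by metis
  show ?thesis
  proof (rule goodfI[where B="1 / k" and L="L / k^2"])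
    fix \<mu> s assume a: "\<mu> \<in> probs X" "s \<in> S"
    show "\<bar>1 / \<Phi> \<mu> s\<bar> \<le> 1 / k" using lb[OF a] k by (simp add: frac_le)
  next
    fix \<mu> s t assume a: "\<mu> \<in> probs X" "s \<in> S" "t \<in> S"
    have "\<bar>1 / \<Phi> \<mu> s - 1 / \<Phi> \<mu> t\<bar> \<le> \<bar>\<Phi> \<mu> s - \<Phi> \<mu> t\<bar> / k^2" using a by (intro inv_lip k lb)
    also have "\<dots> \<le> L * dist s t / k^2" using b(4)[OF a] k by (intro divide_right_mono) auto
    finally show "\<bar>1 / \<Phi> \<mu> s - 1 / \<Phi> \<mu> t\<bar> \<le> L / k^2 * dist s t" by simp
  next
    fix \<mu> \<mu>' s assume a: "\<mu> \<in> probs X" "\<mu>' \<in> probs X" "s \<in> S"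
    have "\<bar>1 / \<Phi> \<mu> s - 1 / \<Phi> \<mu>' s\<bar> \<le> \<bar>\<Phi> \<mu> s - \<Phi> \<mu>' s\<bar> / k^2" using a by (intro inv_lip k lb)
    also have "\<dots> \<le> L * W2 \<mu> \<mu>' / k^2" using b(5)[OF a] k by (intro divide_right_mono) auto
    finally show "\<bar>1 / \<Phi> \<mu> s - 1 / \<Phi> \<mu>' s\<bar> \<le> L / k^2 * W2 \<mu> \<mu>'" by simp
  qed
qed

lemma goodf_comp:
  assumes f: "goodf X S \<Phi>" and h: "\<And>t. t \<in> T \<Longrightarrow> h t \<in> S"
    and hl: "\<And>t t'. t \<in> T \<Longrightarrow> t' \<in> T \<Longrightarrow> dist (h t) (h t') \<le> c * dist t t'" and c: "0 \<le> c"
  shows "goodf X T (\<lambda>\<mu> t. \<Phi> \<mu> (h t))"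
proof -
  obtain B L where b: "0 \<le> B" "0 \<le> L"
    "\<And>\<mu> s. \<mu> \<in> probs X \<Longrightarrow> s \<in> S \<Longrightarrow> \<bar>\<Phi> \<mu> s\<bar> \<le> B"
    "\<And>\<mu> s t. \<mu> \<in> probs X \<Longrightarrow> s \<in> S \<Longrightarrow> t \<in> S \<Longrightarrow> \<bar>\<Phi> \<mu> s - \<Phi> \<mu> t\<bar> \<le> L * dist s t"
    "\<And>\<mu> \<mu>' s. \<mu> \<in> probs X \<Longrightarrow> \<mu>' \<in> probs X \<Longrightarrow> s \<in> S \<Longrightarrow> \<bar>\<Phi> \<mu> s - \<Phi> \<mu>' s\<bar> \<le> L * W2 \<mu> \<mu>'"
    using goodfE[OF f] by metis
  show ?thesis
  proof (rule goodfI[where B=B and L="L * (c + 1)"])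
    fix \<mu> t t' assume a: "\<mu> \<in> probs X" "t \<in> T" "t' \<in> T"
    have "\<bar>\<Phi> \<mu> (h t) - \<Phi> \<mu> (h t')\<bar> \<le> L * dist (h t) (h t')" using a h by (intro b(4)) auto
    also have "\<dots> \<le> L * ((c + 1) * dist t t')"
    proof (intro mult_left_mono)
      have "c * dist t t' \<le> (c + 1) * dist t t'" by (intro mult_right_mono) auto
      then show "dist (h t) (h t') \<le> (c + 1) * dist t t'" using hl[OF a(2,3)] by linarith
    qed (use b in auto)
    finally show "\<bar>\<Phi> \<mu> (h t) - \<Phi> \<mu> (h t')\<bar> \<le> L * (c + 1) * dist t t'" by simp
  next
    fix \<mu> \<mu>' t assume a: "\<mu> \<in> probs X" "\<mu>' \<in> probs X" "t \<in> T"
    have "\<bar>\<Phi> \<mu> (h t) - \<Phi> \<mu>' (h t)\<bar> \<le> L * W2 \<mu> \<mu>'" using a h by (intro b(5)) auto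
    also have "\<dots> \<le> L * (c + 1) * W2 \<mu> \<mu>'"
    proof (rule mult_right_mono[OF _ W2_nonneg])
      have "0 \<le> L * c" using b(2) c by simp
      then show "L \<le> L * (c + 1)" by (simp add: distrib_left)
    qed
    finally show "\<bar>\<Phi> \<mu> (h t) - \<Phi> \<mu>' (h t)\<bar> \<le> L * (c + 1) * W2 \<mu> \<mu>'" .
  next
    fix \<mu> t assume a: "\<mu> \<in> probs X" "t \<in> T"
    show "\<bar>\<Phi> \<mu> (h t)\<bar> \<le> B" using a h b(3) by blast
  qed
qed

lemma cont_bounded:
  fixes g :: "'a::euclidean_space \<Rightarrow> real"
  assumes "compact X" "continuous_on X g"
  obtains c where "\<And>y. y \<in> X \<Longrightarrow> \<bar>g y\<bar> \<le> c"
proof -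
  have "bounded (g ` X)" by (rule compact_imp_bounded[OF compact_continuous_image[OF assms(2,1)]])
  then obtain c where "\<forall>z\<in>g ` X. norm z \<le> c" unfolding bounded_iff by blast
  then show thesis by (intro that[of c]) auto
qed

lemma set_int_meas:
  fixes g :: "'a::euclidean_space \<Rightarrow> real"
  assumes X: "compact X" and mu: "\<mu> \<in> probs X" and g: "continuous_on X g" and b: "\<And>y. y \<in> X \<Longrightarrow> \<bar>g y\<bar> \<le> c"
  shows "set_integrable \<mu> X g" "\<bar>LINT y:X|\<mu>. g y\<bar> \<le> c"
proof -
  note d = probsD[OF mu]
  interpret prob_space \<mu> by (rule d(1))
  have m: "(\<lambda>y. indicator X y *\<^sub>R g y) \<in> borel_measurable \<mu>"
    using borel_measurable_continuous_on_indicator[OF borel_compact[OF X] g]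
    by (simp add: measurable_cong_sets[OF d(2) refl])
  have AE: "AE y in \<mu>. y \<in> X" by (rule probs_AE[OF mu compact_imp_closed[OF X]])
  have ae: "AE y in \<mu>. norm (indicator X y *\<^sub>R g y) \<le> c" using AE by eventually_elim (simp add: b)
  show i: "set_integrable \<mu> X g" unfolding set_integrable_def by (rule integrable_const_bound[OF ae m])
  have "\<bar>LINT y:X|\<mu>. g y\<bar> \<le> (\<integral>y. norm (indicator X y *\<^sub>R g y) \<partial>\<mu>)"
    unfolding set_lebesgue_integral_def using integral_norm_bound[of \<mu> "\<lambda>y. indicator X y *\<^sub>R g y"] by simp
  also have "\<dots> \<le> (\<integral>y. c \<partial>\<mu>)"
    by (rule integral_mono_AE) (use i ae in \<open>auto simp: set_integrable_def\<close>)
  also have "\<dots> = c" by (simp add: prob_space)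
  finally show "\<bar>LINT y:X|\<mu>. g y\<bar> \<le> c" .
qed

lemma set_int_meas_lower:
  fixes g :: "'a::euclidean_space \<Rightarrow> real"
  assumes X: "compact X" and mu: "\<mu> \<in> probs X" and g: "continuous_on X g" and b: "\<And>y. y \<in> X \<Longrightarrow> k \<le> g y"
  shows "k \<le> (LINT y:X|\<mu>. g y)"
proof -
  note d = probsD[OF mu]
  interpret prob_space \<mu> by (rule d(1))
  obtain c where c: "\<And>y. y \<in> X \<Longrightarrow> \<bar>g y\<bar> \<le> c" using cont_bounded[OF X g] by blast
  have i: "set_integrable \<mu> X g" by (rule set_int_meas(1)[OF X mu g c])
  have AE: "AE y in \<mu>. y \<in> X" by (rule probs_AE[OF mu compact_imp_closed[OF X]])
  have "k = (\<integral>y. k \<partial>\<mu>)" by (simp add: prob_space)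
  also have "\<dots> \<le> (LINT y:X|\<mu>. g y)" unfolding set_lebesgue_integral_def
    by (rule integral_mono_AE) (use i AE in \<open>auto simp: set_integrable_def b elim!: AE_mp\<close>)
  finally show ?thesis .
qed

lemma set_int_leb:
  fixes g :: "'a::euclidean_space \<Rightarrow> real"
  assumes X: "compact X" and g: "continuous_on X g" and b: "\<And>y. y \<in> X \<Longrightarrow> \<bar>g y\<bar> \<le> c"
  shows "set_integrable lborel X g" "\<bar>LINT y:X|lborel. g y\<bar> \<le> c * measure lborel X"
proof -
  show i: "set_integrable lborel X g" unfolding set_integrable_def by (rule borel_integrable_compact[OF X g])
  have fin: "emeasure lborel X < \<infinity>" by (rule emeasure_compact_finite[OF X])
  have Xs: "X \<in> sets lborel" using borel_compact[OF X] by simp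
  have "\<bar>LINT y:X|lborel. g y\<bar> \<le> (\<integral>y. norm (indicator X y *\<^sub>R g y) \<partial>lborel)"
    unfolding set_lebesgue_integral_def using integral_norm_bound[of lborel "\<lambda>y. indicator X y *\<^sub>R g y"] by simp
  also have "\<dots> \<le> (\<integral>y. indicator X y * c \<partial>lborel)"
  proof (rule integral_mono)
    show "integrable lborel (\<lambda>y. norm (indicator X y *\<^sub>R g y))" using i by (simp add: set_integrable_def)
    show "integrable lborel (\<lambda>y. indicator X y * c)" using fin Xs by (intro integrable_mult_left) auto
    show "norm (indicator X y *\<^sub>R g y) \<le> indicator X y * c" for y
      using b[of y] by (cases "y \<in> X") auto
  qed
  also have "\<dots> = c * measure lborel X" by simp
  finally show "\<bar>LINT y:X|lborel. g y\<bar> \<le> c * measure lborel X" .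
qed

lemma dist_pair_left: "dist (x, y) (x', y) = dist x x'"
  by (simp add: dist_Pair_Pair)

lemma dist_pair_right: "dist (x, y) (x, y') = dist y y'"
  by (simp add: dist_Pair_Pair)

lemma goodf_slice_cont:
  assumes H: "goodf X (X \<times> X) H" and mu: "\<mu> \<in> probs X" and x: "x \<in> X"
  shows "continuous_on X (\<lambda>y. H \<mu> (x, y))"
proof -
  obtain B L where b: "0 \<le> B" "0 \<le> L"
    "\<And>\<mu> s. \<mu> \<in> probs X \<Longrightarrow> s \<in> X \<times> X \<Longrightarrow> \<bar>H \<mu> s\<bar> \<le> B"
    "\<And>\<mu> s t. \<mu> \<in> probs X \<Longrightarrow> s \<in> X \<times> X \<Longrightarrow> t \<in> X \<times> X \<Longrightarrow> \<bar>H \<mu> s - H \<mu> t\<bar> \<le> L * dist s t"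
    "\<And>\<mu> \<mu>' s. \<mu> \<in> probs X \<Longrightarrow> \<mu>' \<in> probs X \<Longrightarrow> s \<in> X \<times> X \<Longrightarrow> \<bar>H \<mu> s - H \<mu>' s\<bar> \<le> L * W2 \<mu> \<mu>'"
    using goodfE[OF H] by metis
  have "L-lipschitz_on X (\<lambda>y. H \<mu> (x, y))"
  proof (rule lipschitz_onI)
    fix y y' assume "y \<in> X" "y' \<in> X"
    then show "dist (H \<mu> (x, y)) (H \<mu> (x, y')) \<le> L * dist y y'"
      using b(4)[of \<mu> "(x, y)" "(x, y')"] mu x by (simp add: dist_real_def dist_pair_right)
  qed (rule b(2))
  then show ?thesis by (rule lipschitz_on_continuous_on)
qed

lemma goodf_int_meas:
  assumes X: "compact X" and H: "goodf X (X \<times> X) H"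
  shows "goodf X X (\<lambda>\<mu> x. LINT y:X|\<mu>. H \<mu> (x, y))"
proof -
  obtain B L where b: "0 \<le> B" "0 \<le> L"
    "\<And>\<mu> s. \<mu> \<in> probs X \<Longrightarrow> s \<in> X \<times> X \<Longrightarrow> \<bar>H \<mu> s\<bar> \<le> B"
    "\<And>\<mu> s t. \<mu> \<in> probs X \<Longrightarrow> s \<in> X \<times> X \<Longrightarrow> t \<in> X \<times> X \<Longrightarrow> \<bar>H \<mu> s - H \<mu> t\<bar> \<le> L * dist s t"
    "\<And>\<mu> \<mu>' s. \<mu> \<in> probs X \<Longrightarrow> \<mu>' \<in> probs X \<Longrightarrow> s \<in> X \<times> X \<Longrightarrow> \<bar>H \<mu> s - H \<mu>' s\<bar> \<le> L * W2 \<mu> \<mu>'"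
    using goodfE[OF H] by metis
  note cont = goodf_slice_cont[OF H]
  show ?thesis
  proof (rule goodfI[where B=B and L="2 * L"])
    fix \<mu> x assume a: "\<mu> \<in> probs X" "x \<in> X"
    show "\<bar>LINT y:X|\<mu>. H \<mu> (x, y)\<bar> \<le> B"
      by (rule set_int_meas(2)[OF X a(1) cont[OF a]]) (use b(3) a in auto)
  next
    fix \<mu> x x' assume a: "\<mu> \<in> probs X" "x \<in> X" "x' \<in> X"
    have c1: "continuous_on X (\<lambda>y. H \<mu> (x, y))" by (rule cont[OF a(1,2)])
    have c2: "continuous_on X (\<lambda>y. H \<mu> (x', y))" by (rule cont[OF a(1,3)])
    obtain c where "\<And>y. y \<in> X \<Longrightarrow> \<bar>H \<mu> (x, y)\<bar> \<le> c" using b(3) a by blast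
    have i1: "set_integrable \<mu> X (\<lambda>y. H \<mu> (x, y))" by (rule set_int_meas(1)[OF X a(1) c1]) (use b(3) a in auto)
    have i2: "set_integrable \<mu> X (\<lambda>y. H \<mu> (x', y))" by (rule set_int_meas(1)[OF X a(1) c2]) (use b(3) a in auto)
    have "(LINT y:X|\<mu>. H \<mu> (x, y)) - (LINT y:X|\<mu>. H \<mu> (x', y)) = (LINT y:X|\<mu>. H \<mu> (x, y) - H \<mu> (x', y))"
      by (rule set_integral_diff(2)[symmetric, OF i1 i2])
    moreover have "\<bar>LINT y:X|\<mu>. H \<mu> (x, y) - H \<mu> (x', y)\<bar> \<le> L * dist x x'"
    proof (rule set_int_meas(2)[OF X a(1)])
      show "continuous_on X (\<lambda>y. H \<mu> (x, y) - H \<mu> (x', y))" by (intro continuous_on_diff c1 c2)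
      fix y assume "y \<in> X"
      then show "\<bar>H \<mu> (x, y) - H \<mu> (x', y)\<bar> \<le> L * dist x x'"
        using b(4)[of \<mu> "(x, y)" "(x', y)"] a by (simp add: dist_pair_left)
    qed
    moreover have "L * dist x x' \<le> 2 * L * dist x x'" using b(2) by (simp add: mult_right_mono)
    ultimately show "\<bar>(LINT y:X|\<mu>. H \<mu> (x, y)) - (LINT y:X|\<mu>. H \<mu> (x', y))\<bar> \<le> 2 * L * dist x x'"
      by linarith
  next
    fix \<mu> \<mu>' x assume a: "\<mu> \<in> probs X" "\<mu>' \<in> probs X" "x \<in> X"
    have c1: "continuous_on X (\<lambda>y. H \<mu> (x, y))" by (rule cont[OF a(1,3)])
    have c2: "continuous_on X (\<lambda>y. H \<mu>' (x, y))" by (rule cont[OF a(2,3)])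
    have i1: "set_integrable \<mu> X (\<lambda>y. H \<mu> (x, y))" by (rule set_int_meas(1)[OF X a(1) c1]) (use b(3) a in auto)
    have i2: "set_integrable \<mu> X (\<lambda>y. H \<mu>' (x, y))" by (rule set_int_meas(1)[OF X a(1) c2]) (use b(3) a in auto)
    define f where "f y = indicator X y * H \<mu>' (x, y)" for y
    have e1: "(LINT y:X|\<mu>'. H \<mu>' (x, y)) = (\<integral>y. f y \<partial>\<mu>')" unfolding f_def set_lebesgue_integral_def by simp
    have e2: "(LINT y:X|\<mu>. H \<mu>' (x, y)) = (\<integral>y. f y \<partial>\<mu>)" unfolding f_def set_lebesgue_integral_def by simp
    have "(LINT y:X|\<mu>. H \<mu> (x, y)) - (LINT y:X|\<mu>'. H \<mu>' (x, y)) =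
        (LINT y:X|\<mu>. H \<mu> (x, y) - H \<mu>' (x, y)) + ((\<integral>y. f y \<partial>\<mu>) - (\<integral>y. f y \<partial>\<mu>'))"
      using set_integral_diff(2)[OF i1 i2] e1 e2 by simp
    moreover have "\<bar>LINT y:X|\<mu>. H \<mu> (x, y) - H \<mu>' (x, y)\<bar> \<le> L * W2 \<mu> \<mu>'"
    proof (rule set_int_meas(2)[OF X a(1)])
      show "continuous_on X (\<lambda>y. H \<mu> (x, y) - H \<mu>' (x, y))" by (intro continuous_on_diff c1 c2)
      fix y assume "y \<in> X"
      then show "\<bar>H \<mu> (x, y) - H \<mu>' (x, y)\<bar> \<le> L * W2 \<mu> \<mu>'" using b(5) a by auto
    qed
    moreover have "\<bar>(\<integral>y. f y \<partial>\<mu>) - (\<integral>y. f y \<partial>\<mu>')\<bar> \<le> L * W2 \<mu> \<mu>'"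
    proof (rule W2_lip[OF X a(1,2) _ b(2)])
      show "f \<in> borel_measurable borel" unfolding f_def
        using borel_measurable_continuous_on_indicator[OF borel_compact[OF X] c2] by simp
      fix y y' assume "y \<in> X" "y' \<in> X"
      then show "\<bar>f y - f y'\<bar> \<le> L * dist y y'"
        using b(4)[of \<mu>' "(x, y)" "(x, y')"] a unfolding f_def by (simp add: dist_pair_right)
    next
      fix y assume "y \<in> X"
      then show "\<bar>f y\<bar> \<le> B" using b(3)[of \<mu>' "(x, y)"] a unfolding f_def by simp
    qed
    ultimately show "\<bar>(LINT y:X|\<mu>. H \<mu> (x, y)) - (LINT y:X|\<mu>'. H \<mu>' (x, y))\<bar> \<le> 2 * L * W2 \<mu> \<mu>'"
      by linarith
  qed
qed

lemma goodf_int_leb: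
  assumes X: "compact X" and H: "goodf X (X \<times> X) H"
  shows "goodf X X (\<lambda>\<mu> x. LINT y:X|lborel. H \<mu> (x, y))"
proof -
  obtain B L where b: "0 \<le> B" "0 \<le> L"
    "\<And>\<mu> s. \<mu> \<in> probs X \<Longrightarrow> s \<in> X \<times> X \<Longrightarrow> \<bar>H \<mu> s\<bar> \<le> B"
    "\<And>\<mu> s t. \<mu> \<in> probs X \<Longrightarrow> s \<in> X \<times> X \<Longrightarrow> t \<in> X \<times> X \<Longrightarrow> \<bar>H \<mu> s - H \<mu> t\<bar> \<le> L * dist s t"
    "\<And>\<mu> \<mu>' s. \<mu> \<in> probs X \<Longrightarrow> \<mu>' \<in> probs X \<Longrightarrow> s \<in> X \<times> X \<Longrightarrow> \<bar>H \<mu> s - H \<mu>' s\<bar> \<le> L * W2 \<mu> \<mu>'"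
    using goodfE[OF H] by metis
  note cont = goodf_slice_cont[OF H]
  define m where "m = measure lborel X"
  show ?thesis
  proof (rule goodfI[where B="B * m" and L="L * m"])
    fix \<mu> x assume a: "\<mu> \<in> probs X" "x \<in> X"
    show "\<bar>LINT y:X|lborel. H \<mu> (x, y)\<bar> \<le> B * m" unfolding m_def
      by (rule set_int_leb(2)[OF X cont[OF a]]) (use b(3) a in auto)
  next
    fix \<mu> x x' assume a: "\<mu> \<in> probs X" "x \<in> X" "x' \<in> X"
    have c1: "continuous_on X (\<lambda>y. H \<mu> (x, y))" by (rule cont[OF a(1,2)])
    have c2: "continuous_on X (\<lambda>y. H \<mu> (x', y))" by (rule cont[OF a(1,3)])
    have i1: "set_integrable lborel X (\<lambda>y. H \<mu> (x, y))" by (rule set_int_leb(1)[OF X c1]) (use b(3) a in auto)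
    have i2: "set_integrable lborel X (\<lambda>y. H \<mu> (x', y))" by (rule set_int_leb(1)[OF X c2]) (use b(3) a in auto)
    have "(LINT y:X|lborel. H \<mu> (x, y)) - (LINT y:X|lborel. H \<mu> (x', y)) = (LINT y:X|lborel. H \<mu> (x, y) - H \<mu> (x', y))"
      by (rule set_integral_diff(2)[symmetric, OF i1 i2])
    moreover have "\<bar>LINT y:X|lborel. H \<mu> (x, y) - H \<mu> (x', y)\<bar> \<le> L * dist x x' * m" unfolding m_def
    proof (rule set_int_leb(2)[OF X])
      show "continuous_on X (\<lambda>y. H \<mu> (x, y) - H \<mu> (x', y))" by (intro continuous_on_diff c1 c2)
      fix y assume "y \<in> X"
      then show "\<bar>H \<mu> (x, y) - H \<mu> (x', y)\<bar> \<le> L * dist x x'"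
        using b(4)[of \<mu> "(x, y)" "(x', y)"] a by (simp add: dist_pair_left)
    qed
    ultimately show "\<bar>(LINT y:X|lborel. H \<mu> (x, y)) - (LINT y:X|lborel. H \<mu> (x', y))\<bar> \<le> L * m * dist x x'"
      by (simp add: mult_ac)
  next
    fix \<mu> \<mu>' x assume a: "\<mu> \<in> probs X" "\<mu>' \<in> probs X" "x \<in> X"
    have c1: "continuous_on X (\<lambda>y. H \<mu> (x, y))" by (rule cont[OF a(1,3)])
    have c2: "continuous_on X (\<lambda>y. H \<mu>' (x, y))" by (rule cont[OF a(2,3)])
    have i1: "set_integrable lborel X (\<lambda>y. H \<mu> (x, y))" by (rule set_int_leb(1)[OF X c1]) (use b(3) a in auto)
    have i2: "set_integrable lborel X (\<lambda>y. H \<mu>' (x, y))" by (rule set_int_leb(1)[OF X c2]) (use b(3) a in auto)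
    have "(LINT y:X|lborel. H \<mu> (x, y)) - (LINT y:X|lborel. H \<mu>' (x, y)) = (LINT y:X|lborel. H \<mu> (x, y) - H \<mu>' (x, y))"
      by (rule set_integral_diff(2)[symmetric, OF i1 i2])
    moreover have "\<bar>LINT y:X|lborel. H \<mu> (x, y) - H \<mu>' (x, y)\<bar> \<le> L * W2 \<mu> \<mu>' * m" unfolding m_def
    proof (rule set_int_leb(2)[OF X])
      show "continuous_on X (\<lambda>y. H \<mu> (x, y) - H \<mu>' (x, y))" by (intro continuous_on_diff c1 c2)
      fix y assume "y \<in> X"
      then show "\<bar>H \<mu> (x, y) - H \<mu>' (x, y)\<bar> \<le> L * W2 \<mu> \<mu>'" using b(5) a by auto
    qed
    ultimately show "\<bar>(LINT y:X|lborel. H \<mu> (x, y)) - (LINT y:X|lborel. H \<mu>' (x, y))\<bar> \<le> L * m * W2 \<mu> \<mu>'"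
      by (simp add: mult_ac)
  qed
qed

lemma integrable_scale:
  fixes h :: "'a::euclidean_space \<Rightarrow> real"
  assumes hi: "integrable lborel h" and c: "c \<noteq> 0"
  shows "integrable lborel (\<lambda>x. h (c *\<^sub>R x))"
proof -
  have hm: "h \<in> borel_measurable borel" using borel_measurable_integrable[OF hi] by simp
  have eq: "lborel = density (distr lborel borel (\<lambda>x::'a. 0 + c *\<^sub>R x)) (\<lambda>_. ennreal (\<bar>c\<bar> ^ DIM('a)))"
    using lborel_affine[OF c, where t="0::'a"] by simp
  have "integrable (density (distr lborel borel (\<lambda>x::'a. 0 + c *\<^sub>R x)) (\<lambda>_. ennreal (\<bar>c\<bar> ^ DIM('a)))) h"
    using hi by (subst (asm) eq)
  then have "integrable (distr lborel borel (\<lambda>x::'a. 0 + c *\<^sub>R x)) (\<lambda>x. \<bar>c\<bar> ^ DIM('a) *\<^sub>R h x)"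
    by (subst (asm) integrable_density) (use hm in auto)
  then have "integrable lborel (\<lambda>x. \<bar>c\<bar> ^ DIM('a) *\<^sub>R h (0 + c *\<^sub>R x))"
    by (subst (asm) integrable_distr_eq) (use hm in auto)
  then have "integrable lborel (\<lambda>x. inverse (\<bar>c\<bar> ^ DIM('a)) * (\<bar>c\<bar> ^ DIM('a) * h (c *\<^sub>R x)))"
    by (intro integrable_mult_right) simp
  then show ?thesis using c by simp
qed

lemma conv_integrable:
  fixes g :: "'a::euclidean_space \<Rightarrow> real"
  assumes gl: "Lg-lipschitz_on UNIV g" and gn: "\<And>x. 0 \<le> g x" and gi: "integrable lborel g"
    and gm: "integrable lborel (\<lambda>w. norm w * g w)"
  shows "integrable lborel (\<lambda>w. g (z - w) * g w)"
proof (rule Bochner_Integration.integrable_bound)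
  have gc: "continuous_on UNIV g" by (rule lipschitz_on_continuous_on[OF gl])
  have L0: "0 \<le> Lg" using gl by (simp add: lipschitz_on_def)
  show "integrable lborel (\<lambda>w. (g 0 + Lg * norm z) * g w + Lg * (norm w * g w))"
    using gi gm by (intro Bochner_Integration.integrable_add integrable_mult_right) auto
  show "(\<lambda>w. g (z - w) * g w) \<in> borel_measurable lborel"
  proof -
    have "continuous_on UNIV (\<lambda>w. g (z - w))"
      by (rule continuous_on_compose2[OF gc]) (auto intro: continuous_intros)
    then have "continuous_on UNIV (\<lambda>w. g (z - w) * g w)" by (intro continuous_intros gc)
    then show ?thesis using borel_measurable_continuous_onI by simp
  qed
  show "AE w in lborel. norm (g (z - w) * g w) \<le> norm ((g 0 + Lg * norm z) * g w + Lg * (norm w * g w))"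
  proof (rule AE_I2)
    fix w
    have "dist (g (z - w)) (g 0) \<le> Lg * dist (z - w) 0" using gl unfolding lipschitz_on_def by blast
    then have "g (z - w) \<le> g 0 + Lg * norm (z - w)" by (simp add: dist_real_def dist_norm)
    also have "\<dots> \<le> g 0 + Lg * (norm z + norm w)" using L0 by (intro add_left_mono mult_left_mono norm_triangle_ineq4)
    finally have 1: "g (z - w) \<le> g 0 + Lg * norm z + Lg * norm w" by (simp add: algebra_simps)
    have "g (z - w) * g w \<le> (g 0 + Lg * norm z + Lg * norm w) * g w" by (rule mult_right_mono[OF 1 gn])
    moreover have "0 \<le> g (z - w) * g w" using gn by simp
    moreover have "0 \<le> (g 0 + Lg * norm z) * g w + Lg * (norm w * g w)"
      using gn L0 by (intro add_nonneg_nonneg mult_nonneg_nonneg) (auto intro: order.trans[OF _ 1])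
    ultimately show "norm (g (z - w) * g w) \<le> norm ((g 0 + Lg * norm z) * g w + Lg * (norm w * g w))"
      by (simp add: algebra_simps)
  qed
qed


lemma conv_lip:
  fixes g :: "'a::euclidean_space \<Rightarrow> real"
  assumes gl: "Lg-lipschitz_on UNIV g" and gn: "\<And>x. 0 \<le> g x" and gi: "integrable lborel g"
    and gm: "integrable lborel (\<lambda>w. norm w * g w)"
  shows "\<bar>(\<integral>w. g (z - w) * g w \<partial>lborel) - (\<integral>w. g (z' - w) * g w \<partial>lborel)\<bar>
           \<le> Lg * (\<integral>w. g w \<partial>lborel) * dist z z'"
proof -
  have i1: "integrable lborel (\<lambda>w. g (z - w) * g w)" by (rule conv_integrable[OF gl gn gi gm])
  have i2: "integrable lborel (\<lambda>w. g (z' - w) * g w)" by (rule conv_integrable[OF gl gn gi gm])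
  have "(\<integral>w. g (z - w) * g w \<partial>lborel) - (\<integral>w. g (z' - w) * g w \<partial>lborel)
      = (\<integral>w. g (z - w) * g w - g (z' - w) * g w \<partial>lborel)"
    by (rule Bochner_Integration.integral_diff[symmetric, OF i1 i2])
  also have "\<bar>\<dots>\<bar> \<le> (\<integral>w. \<bar>g (z - w) * g w - g (z' - w) * g w\<bar> \<partial>lborel)"
    by (rule integral_abs_bound)
  also have "\<dots> \<le> (\<integral>w. Lg * dist z z' * g w \<partial>lborel)"
  proof (rule integral_mono)
    show "integrable lborel (\<lambda>w. \<bar>g (z - w) * g w - g (z' - w) * g w\<bar>)" using i1 i2 by auto
    show "integrable lborel (\<lambda>w. Lg * dist z z' * g w)" using gi by auto
    fix w
    have "dist (g (z - w)) (g (z' - w)) \<le> Lg * dist (z - w) (z' - w)" using gl unfolding lipschitz_on_def by blast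
    also have "dist (z - w) (z' - w) = dist z z'" by (simp add: dist_norm)
    finally have 1: "\<bar>g (z - w) - g (z' - w)\<bar> \<le> Lg * dist z z'" by (simp add: dist_real_def)
    have "\<bar>g (z - w) * g w - g (z' - w) * g w\<bar> = \<bar>g (z - w) - g (z' - w)\<bar> * g w"
      using gn[of w] by (simp add: left_diff_distrib[symmetric] abs_mult)
    also have "\<dots> \<le> Lg * dist z z' * g w" by (rule mult_right_mono[OF 1 gn])
    finally show "\<bar>g (z - w) * g w - g (z' - w) * g w\<bar> \<le> Lg * dist z z' * g w" .
  qed
  also have "\<dots> = Lg * (\<integral>w. g w \<partial>lborel) * dist z z'" by simp
  finally show ?thesis .
qed

lemma conv_pos:
  fixes g :: "'a::euclidean_space \<Rightarrow> real"
  assumes gl: "Lg-lipschitz_on UNIV g" and gn: "\<And>x. 0 \<le> g x" and gi: "integrable lborel g"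
    and gm: "integrable lborel (\<lambda>w. norm w * g w)"
    and p1: "0 < g (z - w0)" and p2: "0 < g w0"
  shows "0 < (\<integral>w. g (z - w) * g w \<partial>lborel)"
proof -
  have gc: "continuous_on UNIV g" by (rule lipschitz_on_continuous_on[OF gl])
  define F where "F w = g (z - w) * g w" for w
  have Fc: "continuous_on UNIV F" unfolding F_def
  proof -
    have "continuous_on UNIV (\<lambda>w. g (z - w))"
      by (rule continuous_on_compose2[OF gc]) (auto intro: continuous_intros)
    then show "continuous_on UNIV (\<lambda>w. g (z - w) * g w)" by (intro continuous_intros gc)
  qed
  define a where "a = F w0"
  have a: "0 < a" unfolding a_def F_def using p1 p2 by simp
  have "open {w. a / 2 < F w}" by (rule open_Collect_less) (use Fc in \<open>auto intro: continuous_intros\<close>)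
  moreover have "w0 \<in> {w. a / 2 < F w}" using a unfolding a_def by simp
  ultimately obtain r where r: "0 < r" "ball w0 r \<subseteq> {w. a / 2 < F w}" by (meson openE)
  have Fi: "integrable lborel F" unfolding F_def by (rule conv_integrable[OF gl gn gi gm])
  have bs: "ball w0 r \<in> sets lborel" by simp
  have bf: "emeasure lborel (ball w0 r) < \<infinity>" by (rule emeasure_lborel_ball_finite)
  have "0 < measure lborel (ball w0 r) * (a / 2)" using content_ball_pos[OF r(1), of w0] a by simp
  also have "measure lborel (ball w0 r) * (a / 2) = (\<integral>w. indicator (ball w0 r) w * (a / 2) \<partial>lborel)"
    by simp
  also have "\<dots> \<le> (\<integral>w. F w \<partial>lborel)"
  proof (rule integral_mono)
    show "integrable lborel (\<lambda>w. indicator (ball w0 r) w * (a / 2))"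
      using bs bf by (intro integrable_mult_left) auto
    show "integrable lborel F" by (rule Fi)
    fix w show "indicator (ball w0 r) w * (a / 2) \<le> F w"
      using r(2) gn unfolding F_def by (cases "w \<in> ball w0 r") auto
  qed
  finally show ?thesis unfolding F_def .
qed

lemma le_one_plus_sq: "(t::real) \<le> 1 + t^2"
proof -
  have "0 \<le> (t - 1)^2" by simp
  then have "2 * t \<le> t^2 + 1" by (simp add: power2_diff)
  moreover have "0 \<le> t^2" by simp
  ultimately show ?thesis by (cases "t \<ge> 0") linarith+
qed

lemma K_cases:
  fixes \<xi> :: "'a::euclidean_space \<Rightarrow> real"
  assumes xl: "Lx-lipschitz_on UNIV \<xi>" and xn: "\<And>x. 0 \<le> \<xi> x" and xi: "integrable lborel \<xi>"
    and xm: "integrable lborel (\<lambda>x. (norm x)^2 * \<xi> x)" and xs: "closure {x. \<xi> x > 0} = UNIV" and e: "\<epsilon> > 0"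
  shows "(\<forall>z. K_eps \<xi> X \<epsilon> z = 0) \<or>
         ((\<forall>z. 0 < K_eps \<xi> X \<epsilon> z) \<and> (\<exists>LK\<ge>0. \<forall>z w. \<bar>K_eps \<xi> X \<epsilon> z - K_eps \<xi> X \<epsilon> w\<bar> \<le> LK * dist z w))"
proof -
  define s where "s = 1 / \<epsilon>"
  have s: "0 < s" using e by (simp add: s_def)
  define C where "C = (LINT x:X|lborel. \<xi> ((1/\<epsilon>) *\<^sub>R x) / \<epsilon> ^ DIM('a))"
  define c where "c = inverse (C * \<epsilon> ^ DIM('a))"
  define g where "g w = \<xi> (s *\<^sub>R w)" for w
  have xe: "xi_eps \<xi> X \<epsilon> z = c * g z" for z
    unfolding xi_eps_def Let_def C_def[symmetric] c_def g_def s_def by (simp add: divide_inverse mult.commute)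
  have Keq: "K_eps \<xi> X \<epsilon> z = c^2 * (\<integral>w. g (z - w) * g w \<partial>lborel)" for z
  proof -
    have "(\<lambda>w. xi_eps \<xi> X \<epsilon> (z - w) * xi_eps \<xi> X \<epsilon> w) = (\<lambda>w. c^2 * (g (z - w) * g w))"
      by (auto simp: xe power2_eq_square)
    then show ?thesis unfolding K_eps_def by simp
  qed
  show ?thesis
  proof (cases "c = 0")
    case True
    then show ?thesis using Keq by simp
  next
    case False
    then have c2: "0 < c^2" by simp
    have xc: "continuous_on UNIV \<xi>" by (rule lipschitz_on_continuous_on[OF xl])
    have Lx0: "0 \<le> Lx" using xl by (simp add: lipschitz_on_def)
    have gl: "(Lx * s)-lipschitz_on UNIV g"
    proof (rule lipschitz_onI)
      fix a b :: 'a
      have "dist (g a) (g b) \<le> Lx * dist (s *\<^sub>R a) (s *\<^sub>R b)" unfolding g_def using xl unfolding lipschitz_on_def by blast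
      also have "dist (s *\<^sub>R a) (s *\<^sub>R b) = s * dist a b"
        using s by (simp add: dist_norm scaleR_diff_right[symmetric])
      finally show "dist (g a) (g b) \<le> Lx * s * dist a b" by (simp add: mult_ac)
    qed (use Lx0 s in simp)
    have gn: "0 \<le> g x" for x unfolding g_def by (rule xn)
    have gi: "integrable lborel g" unfolding g_def using integrable_scale[OF xi, of s] s by simp
    have xm1: "integrable lborel (\<lambda>x. norm x * \<xi> x)"
    proof (rule Bochner_Integration.integrable_bound)
      show "integrable lborel (\<lambda>x. \<xi> x + (norm x)^2 * \<xi> x)" using xi xm by auto
      show "(\<lambda>x. norm x * \<xi> x) \<in> borel_measurable lborel"
        using borel_measurable_continuous_onI[of "\<lambda>x. norm x * \<xi> x"] xc by (simp add: continuous_intros)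
      show "AE x in lborel. norm (norm x * \<xi> x) \<le> norm (\<xi> x + (norm x)^2 * \<xi> x)"
      proof (rule AE_I2)
        fix x :: 'a
        have "norm x * \<xi> x \<le> (1 + (norm x)^2) * \<xi> x" by (rule mult_right_mono[OF le_one_plus_sq xn])
        then show "norm (norm x * \<xi> x) \<le> norm (\<xi> x + (norm x)^2 * \<xi> x)"
          using xn[of x] by (simp add: algebra_simps)
      qed
    qed
    have h: "integrable lborel (\<lambda>w. norm (s *\<^sub>R w) * \<xi> (s *\<^sub>R w))"
      using integrable_scale[OF xm1, of s] s by blast
    have eq: "(\<lambda>w. inverse s * (norm (s *\<^sub>R w) * \<xi> (s *\<^sub>R w))) = (\<lambda>w. norm w * g w)"
      using s by (auto simp: g_def)
    have gm: "integrable lborel (\<lambda>w. norm w * g w)"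
      using integrable_mult_right[OF h, of "inverse s"] by (subst (asm) eq)
    have pos: "0 < K_eps \<xi> X \<epsilon> z" for z
    proof -
      define S where "S = {x. 0 < \<xi> x}"
      have "S \<noteq> {}"
      proof
        assume "S = {}"
        then have "closure S = {}" by simp
        then show False using xs unfolding S_def by simp
      qed
      then obtain a where a: "a \<in> S" by blast
      define T where "T = {u. 0 < \<xi> (s *\<^sub>R z - u)}"
      have "continuous_on UNIV (\<lambda>u. \<xi> (s *\<^sub>R z - u))"
        by (rule continuous_on_compose2[OF xc]) (auto intro: continuous_intros)
      then have To: "open T" unfolding T_def by (intro open_Collect_less) (auto intro: continuous_intros)
      have "s *\<^sub>R z - a \<in> T" using a unfolding T_def S_def by simp
      then have "T \<inter> closure S \<noteq> {}" using xs S_def by auto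
      then have "T \<inter> S \<noteq> {}" using open_Int_closure_eq_empty[OF To, of S] by simp
      then obtain u where u: "u \<in> T" "u \<in> S" by blast
      define w0 where "w0 = \<epsilon> *\<^sub>R u"
      have sw: "s *\<^sub>R w0 = u" using e unfolding w0_def s_def by simp
      have p2: "0 < g w0" unfolding g_def sw using u(2) S_def by simp
      have "s *\<^sub>R (z - w0) = s *\<^sub>R z - u" using sw by (simp add: scaleR_diff_right)
      then have p1: "0 < g (z - w0)" unfolding g_def using u(1) T_def by simp
      have "0 < (\<integral>w. g (z - w) * g w \<partial>lborel)" by (rule conv_pos[OF gl gn gi gm p1 p2])
      then show ?thesis using Keq c2 by simp
    qed
    have lip: "\<bar>K_eps \<xi> X \<epsilon> z - K_eps \<xi> X \<epsilon> w\<bar> \<le> c^2 * (Lx * s * (\<integral>w. g w \<partial>lborel)) * dist z w" for z w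
    proof -
      have "\<bar>K_eps \<xi> X \<epsilon> z - K_eps \<xi> X \<epsilon> w\<bar>
          = c^2 * \<bar>(\<integral>v. g (z - v) * g v \<partial>lborel) - (\<integral>v. g (w - v) * g v \<partial>lborel)\<bar>"
        unfolding Keq using c2 by (simp add: right_diff_distrib[symmetric] abs_mult)
      also have "\<dots> \<le> c^2 * (Lx * s * (\<integral>w. g w \<partial>lborel) * dist z w)"
        by (rule mult_left_mono[OF conv_lip[OF gl gn gi gm]]) simp
      finally show ?thesis by (simp add: mult_ac)
    qed
    have "0 \<le> c^2 * (Lx * s * (\<integral>w. g w \<partial>lborel))"
      using Lx0 s gn by (intro mult_nonneg_nonneg integral_nonneg) auto
    then show ?thesis using pos lip by blast
  qed
qed

lemma cont_bounded2:
  fixes g :: "'b::metric_space \<Rightarrow> real"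
  assumes "compact S" "continuous_on S g"
  obtains c where "\<And>y. y \<in> S \<Longrightarrow> \<bar>g y\<bar> \<le> c"
proof -
  have "bounded (g ` S)" by (rule compact_imp_bounded[OF compact_continuous_image[OF assms(2,1)]])
  then obtain c where "\<forall>z\<in>g ` S. norm z \<le> c" unfolding bounded_iff by blast
  then show thesis by (intro that[of c]) auto
qed

lemma cont_pos_lower:
  fixes f :: "'b::metric_space \<Rightarrow> real"
  assumes "compact S" "continuous_on S f" "\<And>s. s \<in> S \<Longrightarrow> 0 < f s"
  obtains k where "0 < k" "\<And>s. s \<in> S \<Longrightarrow> k \<le> f s"
proof (cases "S = {}")
  case True then show thesis by (intro that[of 1]) auto
next
  case False
  then obtain x where "x \<in> S" "\<forall>y\<in>S. f x \<le> f y"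
    using continuous_attains_inf[OF assms(1) False assms(2)] by blast
  then show thesis using assms(3) by (intro that[of "f x"]) auto
qed

lemma dist_diff_le: "dist (a - b) (c - d) \<le> dist a c + dist b (d::'a::real_normed_vector)"
proof -
  have "a - b - (c - d) = (a - c) - (b - d)" by (simp add: algebra_simps)
  then show ?thesis unfolding dist_norm by (metis norm_triangle_ineq4)
qed

lemma cont_fst_snd: "continuous_on S (\<lambda>x::'a::real_normed_vector \<times> 'a. fst x - snd x)"
  by (intro continuous_on_diff continuous_on_fst continuous_on_snd continuous_on_id)

lemma goodf_K:
  fixes K :: "'a::euclidean_space \<Rightarrow> real"
  assumes X: "compact X" and LK: "0 \<le> LK" and Kl: "\<And>z w. \<bar>K z - K w\<bar> \<le> LK * dist z w"
  shows "goodf X (X \<times> X) (\<lambda>\<mu> p. K (fst p - snd p))"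
proof -
  have "LK-lipschitz_on UNIV K" by (rule lipschitz_onI) (use Kl LK in \<open>auto simp: dist_real_def\<close>)
  then have Kc: "continuous_on UNIV K" by (rule lipschitz_on_continuous_on)
  have c: "continuous_on (X \<times> X) (\<lambda>p. K (fst p - snd p))"
    by (rule continuous_on_compose2[OF Kc cont_fst_snd]) auto
  obtain B where B: "\<And>p. p \<in> X \<times> X \<Longrightarrow> \<bar>K (fst p - snd p)\<bar> \<le> B"
    using cont_bounded2[OF compact_Times[OF X X] c] by blast
  show ?thesis
  proof (rule goodf_fun[where B=B and L="2 * LK"])
    fix p q :: "'a \<times> 'a"
    have "\<bar>K (fst p - snd p) - K (fst q - snd q)\<bar> \<le> LK * dist (fst p - snd p) (fst q - snd q)" by (rule Kl)
    also have "\<dots> \<le> LK * (dist (fst p) (fst q) + dist (snd p) (snd q))"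
      by (intro mult_left_mono[OF dist_diff_le LK])
    also have "\<dots> \<le> LK * (2 * dist p q)" using dist_fst_le[of p q] dist_snd_le[of p q]
      by (intro mult_left_mono[OF _ LK]) linarith
    finally show "\<bar>K (fst p - snd p) - K (fst q - snd q)\<bar> \<le> 2 * LK * dist p q" by simp
  qed (use B LK in auto)
qed

lemma goodf_snd:
  assumes "goodf X X \<Phi>"
  shows "goodf X (X \<times> X) (\<lambda>\<mu> p. \<Phi> \<mu> (snd p))"
  by (rule goodf_comp[OF assms, where c=1]) (auto simp: dist_snd_le)

lemma pos_case:
  fixes K \<pi> :: "'a::euclidean_space \<Rightarrow> real" and dF :: "'a measure \<Rightarrow> 'a \<Rightarrow> real"
  assumes X: "compact X" and dFg: "goodf X X dF"
    and pic: "continuous_on X \<pi>" and pig: "goodf X X (\<lambda>\<mu> x. \<pi> x)"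
    and k0: "0 < k0" and pilb: "\<And>x. x \<in> X \<Longrightarrow> k0 \<le> \<pi> x"
    and piint: "set_integrable lborel X \<pi>" and piprob: "(LINT x:X|lborel. \<pi> x) = 1"
    and Kpos: "\<And>z. 0 < K z" and LK: "0 \<le> LK" and Kl: "\<And>z w. \<bar>K z - K w\<bar> \<le> LK * dist z w"
  shows "goodf X X (a1 X dF \<sigma> K \<pi>)" "goodf X X (a2 X dF \<sigma> K \<pi>)"
    "goodf X X (a3 X dF \<sigma> K \<pi>)" "goodf X X (a4 X dF \<sigma> K \<pi>)"
proof -
  have Kg: "goodf X (X \<times> X) (\<lambda>\<mu> p. K (fst p - snd p))" by (rule goodf_K[OF X LK Kl])
  have "LK-lipschitz_on UNIV K" by (rule lipschitz_onI) (use Kl LK in \<open>auto simp: dist_real_def\<close>)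
  then have Kc: "continuous_on UNIV K" by (rule lipschitz_on_continuous_on)
  have Kxc: "continuous_on X (\<lambda>y. K (x - y))" for x
    by (rule continuous_on_compose2[OF Kc]) (auto intro: continuous_intros)
  have Kc2: "continuous_on (X \<times> X) (\<lambda>p. K (fst p - snd p))"
    by (rule continuous_on_compose2[OF Kc cont_fst_snd]) auto
  obtain kmin where kmin: "0 < kmin" "\<And>p. p \<in> X \<times> X \<Longrightarrow> kmin \<le> K (fst p - snd p)"
    using cont_pos_lower[OF compact_Times[OF X X] Kc2] Kpos by metis
  have kxy: "kmin \<le> K (x - y)" if "x \<in> X" "y \<in> X" for x y using kmin(2)[of "(x, y)"] that by simp
  define Km where "Km \<mu> = conv_meas K X \<mu>" for \<mu>
  have Kmg: "goodf X X Km"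
    by (rule goodf_cong[OF goodf_int_meas[OF X Kg]]) (simp add: Km_def conv_meas_def)
  have Kmlb: "kmin \<le> Km \<mu> x" if "\<mu> \<in> probs X" "x \<in> X" for \<mu> x
    unfolding Km_def conv_meas_def
    by (rule set_int_meas_lower[OF X that(1) Kxc]) (use kxy that(2) in auto)
  have Kmpos: "0 < Km \<mu> x" if "\<mu> \<in> probs X" "x \<in> X" for \<mu> x
    using less_le_trans[OF kmin(1) Kmlb[OF that]] .
  have pipos: "0 < \<pi> x" if "x \<in> X" for x using less_le_trans[OF k0 pilb[OF that]] .
  have lnKm: "goodf X X (\<lambda>\<mu> x. ln (Km \<mu> x))" by (rule goodf_ln[OF Kmg kmin(1) Kmlb])
  have lnpi: "goodf X X (\<lambda>\<mu> x. ln (\<pi> x))" by (rule goodf_ln[OF pig k0 pilb])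
  define R where "R \<mu> = (\<lambda>x. ln (Km \<mu> x / \<pi> x))" for \<mu>
  have Rg: "goodf X X R"
  proof (rule goodf_cong[OF goodf_diff[OF lnKm lnpi]])
    fix \<mu> x assume a: "\<mu> \<in> probs X" "x \<in> X"
    show "R \<mu> x = ln (Km \<mu> x) - ln (\<pi> x)" unfolding R_def
      by (rule ln_divide_pos[OF Kmpos[OF a] pipos[OF a(2)]])
  qed
  have KL1: "goodf X X (\<lambda>\<mu> x. KL X (Km \<mu>) \<pi>)"
    by (rule goodf_cong[OF goodf_int_leb[OF X goodf_mult[OF goodf_snd[OF Kmg] goodf_snd[OF Rg]]]])
       (simp add: KL_def R_def)
  have A1: "goodf X X (\<lambda>\<mu> x. dF \<mu> x + \<sigma> * R \<mu> x - \<sigma> * KL X (Km \<mu>) \<pi>)"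
    by (intro goodf_diff goodf_add goodf_cmult dFg Rg KL1)
  show "goodf X X (a1 X dF \<sigma> K \<pi>)"
    by (rule goodf_cong[OF A1]) (simp add: a1_def R_def Km_def)

  define P where "P = conv_fun K X \<pi>"
  have Pg: "goodf X X (\<lambda>\<mu> x. P x)"
    by (rule goodf_cong[OF goodf_int_leb[OF X goodf_mult[OF Kg goodf_snd[OF pig]]]]) (simp add: P_def conv_fun_def)
  have Plb: "kmin \<le> P x" if x: "x \<in> X" for x
  proof -
    have cc: "continuous_on X (\<lambda>y. K (x - y) * \<pi> y)" by (intro continuous_on_mult Kxc pic)
    obtain c where c: "\<And>y. y \<in> X \<Longrightarrow> \<bar>K (x - y) * \<pi> y\<bar> \<le> c" using cont_bounded2[OF X cc] by blast
    have i1: "set_integrable lborel X (\<lambda>y. kmin * \<pi> y)" using piint by simp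
    have i2: "set_integrable lborel X (\<lambda>y. K (x - y) * \<pi> y)" by (rule set_int_leb(1)[OF X cc c])
    have "kmin = (LINT y:X|lborel. kmin * \<pi> y)" using piprob by simp
    also have "\<dots> \<le> (LINT y:X|lborel. K (x - y) * \<pi> y)"
    proof (rule set_integral_mono[OF i1 i2])
      fix y assume y: "y \<in> X"
      show "kmin * \<pi> y \<le> K (x - y) * \<pi> y"
        by (rule mult_right_mono[OF kxy[OF x y]]) (use pipos[OF y] in simp)
    qed
    finally show ?thesis unfolding P_def conv_fun_def .
  qed
  have Ppos: "0 < P x" if "x \<in> X" for x using less_le_trans[OF kmin(1) Plb[OF that]] .
  have lnP: "goodf X X (\<lambda>\<mu> x. ln (P x))" by (rule goodf_ln[OF Pg kmin(1) Plb])
  define R2 where "R2 \<mu> = (\<lambda>x. ln (Km \<mu> x / P x))" for \<mu>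
  have R2g: "goodf X X R2"
  proof (rule goodf_cong[OF goodf_diff[OF lnKm lnP]])
    fix \<mu> x assume a: "\<mu> \<in> probs X" "x \<in> X"
    show "R2 \<mu> x = ln (Km \<mu> x) - ln (P x)" unfolding R2_def
      by (rule ln_divide_pos[OF Kmpos[OF a] Ppos[OF a(2)]])
  qed
  have KL2: "goodf X X (\<lambda>\<mu> x. KL X (Km \<mu>) P)"
    by (rule goodf_cong[OF goodf_int_leb[OF X goodf_mult[OF goodf_snd[OF Kmg] goodf_snd[OF R2g]]]])
       (simp add: KL_def R2_def)
  have A2: "goodf X X (\<lambda>\<mu> x. dF \<mu> x + \<sigma> * R2 \<mu> x - \<sigma> * KL X (Km \<mu>) P)"
    by (intro goodf_diff goodf_add goodf_cmult dFg R2g KL2)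
  show "goodf X X (a2 X dF \<sigma> K \<pi>)"
    by (rule goodf_cong[OF A2]) (simp add: a2_def R2_def Km_def P_def)

  have invKm: "goodf X X (\<lambda>\<mu> x. 1 / Km \<mu> x)" by (rule goodf_inv[OF Kmg kmin(1) Kmlb])
  have T2: "goodf X X (\<lambda>\<mu> x. LINT y:X|\<mu>. K (x - y) / Km \<mu> y)"
    by (rule goodf_cong[OF goodf_int_meas[OF X goodf_mult[OF Kg goodf_snd[OF invKm]]]]) simp
  have T3: "goodf X X (\<lambda>\<mu> x. LINT z:X|\<mu>. R \<mu> z)"
    by (rule goodf_cong[OF goodf_int_meas[OF X goodf_snd[OF Rg]]]) simp
  have A3: "goodf X X (\<lambda>\<mu> x. dF \<mu> x + \<sigma> * (R \<mu> x + (LINT y:X|\<mu>. K (x - y) / Km \<mu> y) - (LINT z:X|\<mu>. R \<mu> z) - 1))"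
    by (intro goodf_add goodf_cmult goodf_diff dFg Rg T2 T3 goodf_const)
  show "goodf X X (a3 X dF \<sigma> K \<pi>)"
    by (rule goodf_cong[OF A3]) (simp add: a3_def R_def Km_def)

  have T4: "goodf X X (\<lambda>\<mu> x. conv_fun K X (R \<mu>) x)"
    by (rule goodf_cong[OF goodf_int_leb[OF X goodf_mult[OF Kg goodf_snd[OF Rg]]]]) (simp add: conv_fun_def)
  have A4: "goodf X X (\<lambda>\<mu> x. dF \<mu> x + \<sigma> * conv_fun K X (R \<mu>) x - \<sigma> * KL X (Km \<mu>) \<pi>)"
    by (intro goodf_diff goodf_add goodf_cmult dFg T4 KL1)
  show "goodf X X (a4 X dF \<sigma> K \<pi>)"
    by (rule goodf_cong[OF A4]) (simp add: a4_def R_def Km_def)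
qed

lemma zero_case:
  fixes K \<pi> :: "'a::euclidean_space \<Rightarrow> real" and dF :: "'a measure \<Rightarrow> 'a \<Rightarrow> real"
  assumes dFg: "goodf X X dF" and K0: "\<And>z. K z = 0"
  shows "goodf X X (a1 X dF \<sigma> K \<pi>)" "goodf X X (a2 X dF \<sigma> K \<pi>)"
    "goodf X X (a3 X dF \<sigma> K \<pi>)" "goodf X X (a4 X dF \<sigma> K \<pi>)"
proof -
  have K: "K = (\<lambda>_. 0)" using K0 by auto
  have A: "goodf X X (\<lambda>\<mu> x. dF \<mu> x - \<sigma>)" by (intro goodf_diff dFg goodf_const)
  show "goodf X X (a1 X dF \<sigma> K \<pi>)"
    by (rule goodf_cong[OF dFg]) (simp add: a1_def K conv_meas_def KL_def set_lebesgue_integral_def)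
  show "goodf X X (a2 X dF \<sigma> K \<pi>)"
    by (rule goodf_cong[OF dFg]) (simp add: a2_def K conv_meas_def conv_fun_def KL_def set_lebesgue_integral_def)
  show "goodf X X (a3 X dF \<sigma> K \<pi>)"
    by (rule goodf_cong[OF A]) (simp add: a3_def K conv_meas_def set_lebesgue_integral_def)
  show "goodf X X (a4 X dF \<sigma> K \<pi>)"
    by (rule goodf_cong[OF dFg]) (simp add: a4_def K conv_meas_def conv_fun_def KL_def set_lebesgue_integral_def)
qed

lemma goodf_dF:
  fixes dF :: "'a::euclidean_space measure \<Rightarrow> 'a \<Rightarrow> real"
  assumes b: "\<exists>C_F. \<forall>\<mu>\<in>probs X. \<forall>x\<in>X. \<bar>dF \<mu> x\<bar> \<le> C_F"
    and l: "\<exists>L_F. \<forall>\<mu>\<in>probs X. \<forall>\<nu>\<in>probs X. \<forall>x\<in>X. \<forall>y\<in>X.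
                   \<bar>dF \<mu> x - dF \<nu> y\<bar> \<le> L_F * (W2 \<mu> \<nu> + norm (x - y))"
  shows "goodf X X dF"
proof -
  obtain C where C: "\<forall>\<mu>\<in>probs X. \<forall>x\<in>X. \<bar>dF \<mu> x\<bar> \<le> C" using b by blast
  obtain L where L: "\<forall>\<mu>\<in>probs X. \<forall>\<nu>\<in>probs X. \<forall>x\<in>X. \<forall>y\<in>X.
                   \<bar>dF \<mu> x - dF \<nu> y\<bar> \<le> L * (W2 \<mu> \<nu> + norm (x - y))" using l by blast
  show ?thesis
  proof (rule goodfI[where B=C and L="max L 0"])
    fix \<mu> x assume "\<mu> \<in> probs X" "x \<in> X"
    then show "\<bar>dF \<mu> x\<bar> \<le> C" using C by blast
  next
    fix \<mu> x y assume a: "\<mu> \<in> probs X" "x \<in> X" "y \<in> X"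
    have "\<bar>dF \<mu> x - dF \<mu> y\<bar> \<le> L * (W2 \<mu> \<mu> + norm (x - y))" using L a by blast
    also have "\<dots> = L * dist x y" using W2_self[OF a(1)] by (simp add: dist_norm)
    also have "\<dots> \<le> max L 0 * dist x y" by (intro mult_right_mono) auto
    finally show "\<bar>dF \<mu> x - dF \<mu> y\<bar> \<le> max L 0 * dist x y" .
  next
    fix \<mu> \<mu>' x assume a: "\<mu> \<in> probs X" "\<mu>' \<in> probs X" "x \<in> X"
    have "\<bar>dF \<mu> x - dF \<mu>' x\<bar> \<le> L * (W2 \<mu> \<mu>' + norm (x - x))" using L a by blast
    also have "\<dots> = L * W2 \<mu> \<mu>'" by simp
    also have "\<dots> \<le> max L 0 * W2 \<mu> \<mu>'" by (intro mult_right_mono W2_nonneg) auto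
    finally show "\<bar>dF \<mu> x - dF \<mu>' x\<bar> \<le> max L 0 * W2 \<mu> \<mu>'" .
  qed
qed

lemma goodf_final:
  fixes a :: "'a::euclidean_space measure \<Rightarrow> 'a \<Rightarrow> real"
  assumes "goodf X X a"
  shows "\<exists>M_a L_a. M_a > 0 \<and> L_a > 0 \<and>
           (\<forall>m\<in>probs2 X. \<forall>x\<in>X. \<bar>a m x\<bar> \<le> M_a) \<and>
           (\<forall>m\<in>probs2 X. \<forall>m'\<in>probs2 X. \<forall>x\<in>X. \<forall>y\<in>X.
               \<bar>a m x - a m' y\<bar> \<le> L_a * (norm (x - y) + W2 m m'))"
proof -
  obtain B L where b: "0 \<le> B" "0 \<le> L"
    "\<And>\<mu> s. \<mu> \<in> probs X \<Longrightarrow> s \<in> X \<Longrightarrow> \<bar>a \<mu> s\<bar> \<le> B"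
    "\<And>\<mu> s t. \<mu> \<in> probs X \<Longrightarrow> s \<in> X \<Longrightarrow> t \<in> X \<Longrightarrow> \<bar>a \<mu> s - a \<mu> t\<bar> \<le> L * dist s t"
    "\<And>\<mu> \<mu>' s. \<mu> \<in> probs X \<Longrightarrow> \<mu>' \<in> probs X \<Longrightarrow> s \<in> X \<Longrightarrow> \<bar>a \<mu> s - a \<mu>' s\<bar> \<le> L * W2 \<mu> \<mu>'"
    using goodfE[OF assms] by metis
  have sub: "probs2 X \<subseteq> probs X" by (auto simp: probs2_def)
  have 1: "\<forall>m\<in>probs2 X. \<forall>x\<in>X. \<bar>a m x\<bar> \<le> B + 1" using b(3) sub by fastforce
  have 2: "\<forall>m\<in>probs2 X. \<forall>m'\<in>probs2 X. \<forall>x\<in>X. \<forall>y\<in>X.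
               \<bar>a m x - a m' y\<bar> \<le> (L + 1) * (norm (x - y) + W2 m m')"
  proof (intro ballI)
    fix m m' x y assume a: "m \<in> probs2 X" "m' \<in> probs2 X" "x \<in> X" "y \<in> X"
    then have m: "m \<in> probs X" "m' \<in> probs X" using sub by auto
    have "\<bar>a m x - a m' y\<bar> \<le> \<bar>a m x - a m y\<bar> + \<bar>a m y - a m' y\<bar>" by linarith
    also have "\<dots> \<le> L * dist x y + L * W2 m m'" using b(4)[OF m(1) a(3,4)] b(5)[OF m a(4)] by linarith
    also have "\<dots> = L * (norm (x - y) + W2 m m')" by (simp add: dist_norm algebra_simps)
    also have "\<dots> \<le> (L + 1) * (norm (x - y) + W2 m m')"
      using W2_nonneg[of m m'] by (intro mult_right_mono) auto
    finally show "\<bar>a m x - a m' y\<bar> \<le> (L + 1) * (norm (x - y) + W2 m m')" .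
  qed
  show ?thesis
    by (rule exI[of _ "B + 1"], rule exI[of _ "L + 1"]) (use 1 2 b in auto)
qed

theorem mainTheorem6:
  fixes X :: "'a::euclidean_space set"
    and F :: "'a measure \<Rightarrow> real"
    and dF :: "'a measure \<Rightarrow> 'a \<Rightarrow> real"
    and \<xi> \<pi> U :: "'a \<Rightarrow> real"
    and \<epsilon> \<sigma> :: real
    and a :: "'a measure \<Rightarrow> 'a \<Rightarrow> real"
  assumes X_compact: "compact X"
    \<comment> \<open>assumptions on F\<close>
    and F_lsc: "\<And>\<mu>s \<mu>. (\<And>n. \<mu>s n \<in> probs X) \<Longrightarrow> \<mu> \<in> probs X \<Longrightarrow> weak_conv_meas \<mu>s \<mu> \<Longrightarrow>
                 ereal (F \<mu>) \<le> liminf (\<lambda>n. ereal (F (\<mu>s n)))"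
    and F_below: "\<exists>F_min. \<forall>\<mu>\<in>probs X. F_min \<le> F \<mu>"
    and F_flat: "flat_derivative X F dF"
    and dF_bdd: "\<exists>C_F. \<forall>\<mu>\<in>probs X. \<forall>x\<in>X. \<bar>dF \<mu> x\<bar> \<le> C_F"
    and dF_lip: "\<exists>L_F. \<forall>\<mu>\<in>probs X. \<forall>\<nu>\<in>probs X. \<forall>x\<in>X. \<forall>y\<in>X.
                   \<bar>dF \<mu> x - dF \<nu> y\<bar> \<le> L_F * (W2 \<mu> \<nu> + norm (x - y))"
    \<comment> \<open>assumptions on the kernel\<close>
    and xi_smooth: "smooth_fun \<xi>"
    and xi_lip: "\<exists>L. L-lipschitz_on UNIV \<xi>"
    and xi_radial: "\<And>x y. norm x = norm y \<Longrightarrow> \<xi> x = \<xi> y"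
    and xi_nonneg: "\<And>x. \<xi> x \<ge> 0"
    and xi_integrable: "integrable lborel \<xi>"
    and xi_prob: "(\<integral>x. \<xi> x \<partial>lborel) = 1"
    and xi_support: "closure {x. \<xi> x > 0} = UNIV"
    and xi_moment: "integrable lborel (\<lambda>x. (norm x)^2 * \<xi> x)"
    \<comment> \<open>assumptions on the target density\<close>
    and pi_exp: "\<And>x. x \<in> X \<Longrightarrow> \<pi> x = exp (- U x)"
    and U_cont: "continuous_on X U"
    and pi_integrable: "set_integrable lborel X \<pi>"
    and pi_prob: "(LINT x:X|lborel. \<pi> x) = 1"
    and pi_lip: "\<exists>L. L-lipschitz_on X \<pi>"
    \<comment> \<open>parameters\<close>
    and eps_pos: "\<epsilon> > 0"
    and sigma_pos: "\<sigma> > 0"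
    and a_choice: "a \<in> {a1 X dF \<sigma> (K_eps \<xi> X \<epsilon>) \<pi>, a2 X dF \<sigma> (K_eps \<xi> X \<epsilon>) \<pi>,
                        a3 X dF \<sigma> (K_eps \<xi> X \<epsilon>) \<pi>, a4 X dF \<sigma> (K_eps \<xi> X \<epsilon>) \<pi>}"
  shows "\<exists>M_a L_a. M_a > 0 \<and> L_a > 0 \<and>
           (\<forall>m\<in>probs2 X. \<forall>x\<in>X. \<bar>a m x\<bar> \<le> M_a) \<and>
           (\<forall>m\<in>probs2 X. \<forall>m'\<in>probs2 X. \<forall>x\<in>X. \<forall>y\<in>X.
               \<bar>a m x - a m' y\<bar> \<le> L_a * (norm (x - y) + W2 m m'))"
proof -
  have X: "compact X" by (rule X_compact)
  have dFg: "goodf X X dF" by (rule goodf_dF[OF dF_bdd dF_lip])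
  obtain Lp where Lp: "Lp-lipschitz_on X \<pi>" using pi_lip by blast
  have Lp0: "0 \<le> Lp" using Lp by (simp add: lipschitz_on_def)
  have pic: "continuous_on X \<pi>" by (rule lipschitz_on_continuous_on[OF Lp])
  obtain pB where pB: "\<And>x. x \<in> X \<Longrightarrow> \<bar>\<pi> x\<bar> \<le> pB" using cont_bounded2[OF X pic] by blast
  have pig: "goodf X X (\<lambda>\<mu> x. \<pi> x)"
  proof (rule goodf_fun[where B=pB and L=Lp])
    fix s t assume "s \<in> X" "t \<in> X"
    then show "\<bar>\<pi> s - \<pi> t\<bar> \<le> Lp * dist s t" using Lp unfolding lipschitz_on_def dist_real_def by blast
  qed (use pB Lp0 in auto)
  obtain k0 where k0: "0 < k0" "\<And>x. x \<in> X \<Longrightarrow> k0 \<le> \<pi> x"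
    using cont_pos_lower[OF X pic] pi_exp by (metis exp_gt_zero)
  obtain Lx where Lx: "Lx-lipschitz_on UNIV \<xi>" using xi_lip by blast
  have all: "goodf X X (a1 X dF \<sigma> (K_eps \<xi> X \<epsilon>) \<pi>) \<and> goodf X X (a2 X dF \<sigma> (K_eps \<xi> X \<epsilon>) \<pi>) \<and>
      goodf X X (a3 X dF \<sigma> (K_eps \<xi> X \<epsilon>) \<pi>) \<and> goodf X X (a4 X dF \<sigma> (K_eps \<xi> X \<epsilon>) \<pi>)"
    using K_cases[OF Lx xi_nonneg xi_integrable xi_moment xi_support eps_pos, of X]
  proof
    assume "\<forall>z. K_eps \<xi> X \<epsilon> z = 0"
    then show ?thesis using zero_case[OF dFg, of "K_eps \<xi> X \<epsilon>" \<sigma> \<pi>] by blast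
  next
    assume "(\<forall>z. 0 < K_eps \<xi> X \<epsilon> z) \<and> (\<exists>LK\<ge>0. \<forall>z w. \<bar>K_eps \<xi> X \<epsilon> z - K_eps \<xi> X \<epsilon> w\<bar> \<le> LK * dist z w)"
    then obtain LK where Kp: "\<And>z. 0 < K_eps \<xi> X \<epsilon> z" and LK: "0 \<le> LK"
      and Kl: "\<And>z w. \<bar>K_eps \<xi> X \<epsilon> z - K_eps \<xi> X \<epsilon> w\<bar> \<le> LK * dist z w" by blast
    show ?thesis using pos_case[OF X dFg pic pig k0 pi_integrable pi_prob Kp LK Kl, of \<sigma>] by blast
  qed
  have "goodf X X a" using a_choice all by auto
  then show ?thesis by (rule goodf_final)
qed

end
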